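(* Let $\Gamma$ and $\Gamma'$ be LJB-contexts such that $\Gamma\longrightarrow\Gamma'$ by one step of the cleaning rewrite system, and let $A$ be a formula. Let $\Delta\vdash E$ be a flattening of the LJB-sequent $\Gamma\vdash A$ and $\Delta'\vdash E'$ be a flattening of $\Gamma'\vdash A$. Then $\Delta\vdash E$ has a derivation in LJ$^{+}$ if and only if $\Delta'\vdash E'$ has a derivation in LJ$^{+}$, and the derivations have the same height.
   Context: Minimal predicate logic: terms $t ::= x \mid f(t_1,\dots,t_n)$, formulas $A ::= P(t_1,\dots,t_n)\mid A\rightarrow A\mid \forall x\,A$. LJ$^{+}$-sequents $\Delta\vdash E$: $\Delta$ a finite multiset of formulas. LJ$^{+}$ is the sequent calculus (formulas modulo $\alpha$-equivalence) with rules: (L$\rightarrow$) from $\Delta, A_1\rightarrow\dots\rightarrow A_n\rightarrow P\vdash A_i$ ($i=1,\dots,n$, $n\ge0$) infer $\Delta, A_1\rightarrow\dots\rightarrow A_n\rightarrow P\vdash P$, $P$ atomic; (R$\forall$) from $\Delta\vdash A$ infer $\Delta\vdash\forall x\,A$ if $x$ is not free in $\Delta$; (R$\rightarrow$) from $\Delta,A\vdash B$ infer $\Delta\vdash A\rightarrow B$. Height = maximal number of rule instances on a branch. LJB-contexts and items: an LJB-context is a finite multiset of items; an item is a formula or $[\Gamma]_V$ with $V$ a finite set of variables (bound by the bracket) and $\Gamma$ an LJB-context. $FV([\Gamma]_V)=FV(\Gamma)\setminus V$, $BV([\Gamma]_V)=BV(\Gamma)\cup V$, $FV$, $BV$ of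 a context being the unions over its items and of a formula the usual ones. An LJB-sequent $\Gamma\vdash A$ is an LJB-context and a formula. Cleaning rules (applicable anywhere in a context, contexts being multisets): $[I,\Gamma]_V\longrightarrow I,[\Gamma]_V$ if $FV(I)\cap V=\emptyset$; $[\ ]_V\longrightarrow\emptyset$; $I\,I\longrightarrow I$. A fresh $\alpha$-variant of an LJB-sequent is an LJB-sequent $\alpha$-equivalent to it (renaming variables bound by quantifiers or by brackets) in which all bound variables are pairwise distinct and distinct from the free variables. An LJ$^{+}$-sequent is a flattening of an LJB-sequent if it is obtained by erasing all brackets (keeping their contents) in a fresh $\alpha$-variant of it. *)

theory Defs
  imports Main "HOL-Library.Multiset" "HOL-Library.FSet"
begin

type_synonym var = nat

datatype trm = Var var | Fn nat "trm list"

datatype fm = Pred nat "trm list" | Imp fm fm | All var fm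

primrec fv_trm :: "trm \<Rightarrow> var set" where
  "fv_trm (Var x) = {x}"
| "fv_trm (Fn f ts) = \<Union> (set (map fv_trm ts))"

primrec fv_fm :: "fm \<Rightarrow> var set" where
  "fv_fm (Pred p ts) = \<Union> (set (map fv_trm ts))"
| "fv_fm (Imp A B) = fv_fm A \<union> fv_fm B"
| "fv_fm (All x A) = fv_fm A - {x}"

primrec bv_fm :: "fm \<Rightarrow> var multiset" where
  "bv_fm (Pred p ts) = {#}"
| "bv_fm (Imp A B) = bv_fm A + bv_fm B"
| "bv_fm (All x A) = add_mset x (bv_fm A)"

definition fv_mset :: "fm multiset \<Rightarrow> var set" where
  "fv_mset \<Delta> = \<Union> (fv_fm ` set_mset \<Delta>)"

fun imps :: "fm list \<Rightarrow> fm \<Rightarrow> fm" where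
  "imps [] P = P"
| "imps (A # As) P = Imp A (imps As P)"

text \<open>Each layer is the graph of a bijection between the variables bound by two
  corresponding binders (a quantifier, or a bracket binding a set of variables).\<close>
fun var_eq :: "(var \<times> var) set list \<Rightarrow> var \<Rightarrow> var \<Rightarrow> bool" where
  "var_eq [] x y = (x = y)"
| "var_eq (R # Rs) x y =
     (if x \<in> Domain R \<or> y \<in> Range R then (x, y) \<in> R else var_eq Rs x y)"

inductive alpha_trm :: "(var \<times> var) set list \<Rightarrow> trm \<Rightarrow> trm \<Rightarrow> bool" where
  "var_eq Rs x y \<Longrightarrow> alpha_trm Rs (Var x) (Var y)"
| "length ts = length ss \<Longrightarrow> (\<forall>i<length ts. alpha_trm Rs (ts ! i) (ss ! i))
    \<Longrightarrow> alpha_trm Rs (Fn f ts) (Fn f ss)"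

inductive alpha_fm :: "(var \<times> var) set list \<Rightarrow> fm \<Rightarrow> fm \<Rightarrow> bool" where
  "length ts = length ss \<Longrightarrow> (\<forall>i<length ts. alpha_trm Rs (ts ! i) (ss ! i))
    \<Longrightarrow> alpha_fm Rs (Pred p ts) (Pred p ss)"
| "alpha_fm Rs A C \<Longrightarrow> alpha_fm Rs B D \<Longrightarrow> alpha_fm Rs (Imp A B) (Imp C D)"
| "alpha_fm ({(x, y)} # Rs) A B \<Longrightarrow> alpha_fm Rs (All x A) (All y B)"

text \<open>\<open>lj \<Delta> E h\<close>: the sequent \<open>\<Delta> \<turnstile> E\<close> has an LJ+-derivation of height \<open>h\<close>.
  Formulas are treated modulo alpha-equivalence: the principal formula of (L\<rightarrow>) may be
  any alpha-variant of the context formula, and the conclusions of (R\<forall>), (R\<rightarrow>) may be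
  any alpha-variants of the displayed formulas.\<close>
inductive lj :: "fm multiset \<Rightarrow> fm \<Rightarrow> nat \<Rightarrow> bool" where
  L_imp: "F \<in># \<Delta> \<Longrightarrow> alpha_fm [] F (imps As (Pred p ts)) \<Longrightarrow> length hs = length As
    \<Longrightarrow> (\<forall>i<length As. lj \<Delta> (As ! i) (hs ! i))
    \<Longrightarrow> lj \<Delta> (Pred p ts) (Suc (Max (insert 0 (set hs))))"
| R_all: "lj \<Delta> A n \<Longrightarrow> x \<notin> fv_mset \<Delta> \<Longrightarrow> alpha_fm [] B (All x A) \<Longrightarrow> lj \<Delta> B (Suc n)"
| R_imp: "lj (add_mset A \<Delta>) B n \<Longrightarrow> alpha_fm [] C (Imp A B) \<Longrightarrow> lj \<Delta> C (Suc n)"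

datatype item = Fm fm | Brk "var fset" "item multiset"

type_synonym ljb_ctx = "item multiset"

primrec fv_item :: "item \<Rightarrow> var set" where
  "fv_item (Fm A) = fv_fm A"
| "fv_item (Brk V \<Gamma>) = \<Union> (set_mset (image_mset fv_item \<Gamma>)) - fset V"

primrec bv_item :: "item \<Rightarrow> var multiset" where
  "bv_item (Fm A) = bv_fm A"
| "bv_item (Brk V \<Gamma>) = mset_set (fset V) + sum_mset (image_mset bv_item \<Gamma>)"

definition fv_ctx :: "ljb_ctx \<Rightarrow> var set" where
  "fv_ctx \<Gamma> = \<Union> (fv_item ` set_mset \<Gamma>)"

definition bv_ctx :: "ljb_ctx \<Rightarrow> var multiset" where
  "bv_ctx \<Gamma> = sum_mset (image_mset bv_item \<Gamma>)"

primrec flat_item :: "item \<Rightarrow> fm multiset" where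
  "flat_item (Fm A) = {#A#}"
| "flat_item (Brk V \<Gamma>) = sum_mset (image_mset flat_item \<Gamma>)"

definition flat_ctx :: "ljb_ctx \<Rightarrow> fm multiset" where
  "flat_ctx \<Gamma> = sum_mset (image_mset flat_item \<Gamma>)"

inductive clean1 :: "ljb_ctx \<Rightarrow> ljb_ctx \<Rightarrow> bool" where
  push_out: "fv_item I \<inter> fset V = {} \<Longrightarrow>
     clean1 (add_mset (Brk V (add_mset I \<Gamma>)) \<Xi>) (add_mset I (add_mset (Brk V \<Gamma>) \<Xi>))"
| empty_brk: "clean1 (add_mset (Brk V {#}) \<Xi>) \<Xi>"
| dup: "clean1 (add_mset I (add_mset I \<Xi>)) (add_mset I \<Xi>)"
| inside: "clean1 \<Gamma> \<Gamma>' \<Longrightarrow> clean1 (add_mset (Brk V \<Gamma>) \<Xi>) (add_mset (Brk V \<Gamma>') \<Xi>)"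

inductive alpha_item :: "(var \<times> var) set list \<Rightarrow> item \<Rightarrow> item \<Rightarrow> bool" where
  "alpha_fm Rs A B \<Longrightarrow> alpha_item Rs (Fm A) (Fm B)"
| "bij_betw f (fset V) (fset W) \<Longrightarrow> length xs = length ys
    \<Longrightarrow> (\<forall>i<length xs. alpha_item ((\<lambda>x. (x, f x)) ` fset V # Rs) (xs ! i) (ys ! i))
    \<Longrightarrow> alpha_item Rs (Brk V (mset xs)) (Brk W (mset ys))"

definition alpha_ctx :: "ljb_ctx \<Rightarrow> ljb_ctx \<Rightarrow> bool" where
  "alpha_ctx \<Gamma> \<Gamma>0 \<longleftrightarrow> (\<exists>xs ys. mset xs = \<Gamma> \<and> mset ys = \<Gamma>0 \<and> list_all2 (alpha_item []) xs ys)"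

definition fresh_variant :: "ljb_ctx \<Rightarrow> fm \<Rightarrow> ljb_ctx \<Rightarrow> fm \<Rightarrow> bool" where
  "fresh_variant \<Gamma> A \<Gamma>0 A0 \<longleftrightarrow>
     alpha_ctx \<Gamma> \<Gamma>0 \<and> alpha_fm [] A A0 \<and>
     (\<forall>x. count (bv_ctx \<Gamma>0 + bv_fm A0) x \<le> 1) \<and>
     set_mset (bv_ctx \<Gamma>0 + bv_fm A0) \<inter> (fv_ctx \<Gamma>0 \<union> fv_fm A0) = {}"

definition flattening :: "fm multiset \<Rightarrow> fm \<Rightarrow> ljb_ctx \<Rightarrow> fm \<Rightarrow> bool" where
  "flattening \<Delta> E \<Gamma> A \<longleftrightarrow> (\<exists>\<Gamma>0. fresh_variant \<Gamma> A \<Gamma>0 E \<and> \<Delta> = flat_ctx \<Gamma>0)"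

end

theory Submission
  imports Defs
begin


fun veq :: "(var \<times> var) set \<Rightarrow> (var \<times> var) set list \<Rightarrow> var \<Rightarrow> var \<Rightarrow> bool" where
  "veq \<rho> [] x y = ((x, y) \<in> \<rho>)"
| "veq \<rho> (R # Rs) x y = (if x \<in> Domain R \<or> y \<in> Range R then (x, y) \<in> R else veq \<rho> Rs x y)"

lemma var_eq_veq: "var_eq Rs x y = veq Id Rs x y"
  by (induction Rs) auto

inductive trel :: "(var \<Rightarrow> var \<Rightarrow> bool) \<Rightarrow> trm \<Rightarrow> trm \<Rightarrow> bool" for V where
  tvar: "V x y \<Longrightarrow> trel V (Var x) (Var y)"
| tfn: "list_all2 (trel V) ts ss \<Longrightarrow> trel V (Fn f ts) (Fn f ss)"

lemma trel_mono_aux: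
  "trel V t s \<Longrightarrow> (\<forall>x\<in>fv_trm t. \<forall>y. V x y \<longrightarrow> W x y) \<longrightarrow> trel W t s"
proof (induction rule: trel.induct)
  case (tvar x y) then show ?case by (auto intro: trel.tvar)
next
  case (tfn ts ss f)
  show ?case
  proof
    assume h: "\<forall>x\<in>fv_trm (Fn f ts). \<forall>y. V x y \<longrightarrow> W x y"
    have "list_all2 (trel W) ts ss"
      using tfn h unfolding list_all2_conv_all_nth by (fastforce simp: nth_mem)
    then show "trel W (Fn f ts) (Fn f ss)" by (rule trel.tfn)
  qed
qed

lemma trel_mono: "trel V t s \<Longrightarrow> (\<And>x y. x \<in> fv_trm t \<Longrightarrow> V x y \<Longrightarrow> W x y) \<Longrightarrow> trel W t s"
  using trel_mono_aux by blast

lemma trel_conv: "trel V t s \<Longrightarrow> trel (\<lambda>x y. V y x) s t"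
proof (induction rule: trel.induct)
  case (tvar x y) then show ?case by (auto intro: trel.tvar)
next
  case (tfn ts ss f)
  then have "list_all2 (trel (\<lambda>x y. V y x)) ss ts"
    unfolding list_all2_conv_all_nth by auto
  then show ?case by (rule trel.tfn)
qed

lemma trel_comp_aux: "trel V t s \<Longrightarrow> \<forall>u. trel W s u \<longrightarrow> trel (V OO W) t u"
proof (induction rule: trel.induct)
  case (tvar x y) then show ?case by (auto intro: trel.tvar elim: trel.cases)
next
  case (tfn ts ss f)
  show ?case
  proof (intro allI impI)
    fix u assume "trel W (Fn f ss) u"
    then obtain us where u: "u = Fn f us" and us: "list_all2 (trel W) ss us"
      by (auto elim: trel.cases)
    have "list_all2 (trel (V OO W)) ts us"
      using tfn us unfolding list_all2_conv_all_nth by auto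
    then show "trel (V OO W) (Fn f ts) u" unfolding u by (rule trel.tfn)
  qed
qed

lemma trel_comp: "trel V t s \<Longrightarrow> trel W s u \<Longrightarrow> trel (V OO W) t u"
  using trel_comp_aux by blast

lemma trel_ex: "(\<forall>x\<in>fv_trm t. \<exists>y. V x y) \<Longrightarrow> \<exists>s. trel V t s"
proof (induction t)
  case (Var x) then show ?case by (auto intro: trel.tvar)
next
  case (Fn f ts)
  define ss where "ss = map (\<lambda>t. SOME s. trel V t s) ts"
  have "list_all2 (trel V) ts ss"
    unfolding list_all2_conv_all_nth ss_def
  proof (intro conjI allI impI)
    fix i assume i: "i < length ts"
    then have "ts ! i \<in> set ts" by simp
    with Fn have "\<exists>s. trel V (ts ! i) s" by auto
    then show "trel V (ts ! i) (map (\<lambda>t. SOME s. trel V t s) ts ! i)"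
      using i by (auto intro: someI_ex)
  qed simp
  then show ?case by (auto intro: trel.tfn)
qed

lemma trel_fun_aux: "trel V t s \<Longrightarrow> \<forall>u. (\<forall>x\<in>fv_trm t. \<forall>y z. V x y \<longrightarrow> V x z \<longrightarrow> y = z) \<longrightarrow> trel V t u \<longrightarrow> s = u"
proof (induction rule: trel.induct)
  case (tvar x y)
  show ?case
  proof (intro allI impI)
    fix u assume h: "\<forall>x'\<in>fv_trm (Var x). \<forall>y z. V x' y \<longrightarrow> V x' z \<longrightarrow> y = z" and "trel V (Var x) u"
    then obtain y' where "u = Var y'" "V x y'" by (auto elim: trel.cases)
    then show "Var y = u" using h tvar by simp
  qed
next
  case (tfn ts ss f)
  show ?case
  proof (intro allI impI)
    fix u assume h: "\<forall>x\<in>fv_trm (Fn f ts). \<forall>y z. V x y \<longrightarrow> V x z \<longrightarrow> y = z" and "trel V (Fn f ts) u"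
    then obtain us where u: "u = Fn f us" and us: "list_all2 (trel V) ts us"
      by (auto elim: trel.cases)
    have "ss = us"
    proof (rule nth_equalityI)
      have len: "length ts = length ss" using tfn.IH by (rule list_all2_lengthD)
      show "length ss = length us" using len us by (simp add: list_all2_lengthD)
      fix i assume i: "i < length ss"
      have ii: "i < length ts" using i len by simp
      have "trel V (ts ! i) (ss ! i) \<and> (\<forall>u. (\<forall>x\<in>fv_trm (ts ! i). \<forall>y z. V x y \<longrightarrow> V x z \<longrightarrow> y = z) \<longrightarrow> trel V (ts ! i) u \<longrightarrow> ss ! i = u)"
        using list_all2_nthD[OF tfn.IH ii] by simp
      moreover have "trel V (ts ! i) (us ! i)" using list_all2_nthD[OF us ii] .
      moreover have "\<forall>x\<in>fv_trm (ts ! i). \<forall>y z. V x y \<longrightarrow> V x z \<longrightarrow> y = z"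
        using h nth_mem[OF ii] by auto
      ultimately show "ss ! i = us ! i" by blast
    qed
    then show "Fn f ss = u" using u by simp
  qed
qed

lemma trel_fv: "trel V t s \<Longrightarrow> x \<in> fv_trm t \<Longrightarrow> \<exists>y\<in>fv_trm s. V x y"
proof (induction arbitrary: x rule: trel.induct)
  case (tvar x y) then show ?case by auto
next
  case (tfn ts ss f)
  then obtain i where i: "i < length ts" "x \<in> fv_trm (ts ! i)"
    by (auto simp: in_set_conv_nth)
  have "trel V (ts ! i) (ss ! i) \<and> (\<forall>x. x \<in> fv_trm (ts ! i) \<longrightarrow> (\<exists>y\<in>fv_trm (ss ! i). V x y))"
    using tfn.IH i(1) unfolding list_all2_conv_all_nth by blast
  then obtain y where "y \<in> fv_trm (ss ! i)" "V x y" using i by blast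
  moreover have "i < length ss" using tfn.IH i(1) by (simp add: list_all2_lengthD)
  ultimately show ?case by auto
qed

lemma trel_refl: "(\<forall>x\<in>fv_trm t. V x x) \<Longrightarrow> trel V t t"
proof (induction t)
  case (Var x) then show ?case by (auto intro: trel.tvar)
next
  case (Fn f ts)
  then have "list_all2 (trel V) ts ts" unfolding list_all2_conv_all_nth by auto
  then show ?case by (rule trel.tfn)
qed

lemma alpha_trm_trel: "alpha_trm Rs t s \<Longrightarrow> trel (veq Id Rs) t s"
proof (induction rule: alpha_trm.induct)
  case (1 Rs x y) then show ?case by (auto intro: trel.tvar simp: var_eq_veq)
next
  case (2 ts ss Rs f) then show ?case by (auto intro!: trel.tfn simp: list_all2_conv_all_nth)
qed

lemma trel_alpha_trm: "trel (veq Id Rs) t s \<Longrightarrow> alpha_trm Rs t s"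
proof (induction rule: trel.induct)
  case (tvar x y) then show ?case by (auto intro: alpha_trm.intros simp: var_eq_veq)
next
  case (tfn ts ss f) then show ?case by (auto intro!: alpha_trm.intros simp: list_all2_conv_all_nth)
qed

lemma finite_fv_trm: "finite (fv_trm t)"
  by (induction t) auto

lemma finite_fv_fm: "finite (fv_fm A)"
  by (induction A) (auto simp: finite_fv_trm)



definition gr :: "(var \<Rightarrow> var) \<Rightarrow> (var \<times> var) set" where
  "gr \<sigma> = {(x, y). y = \<sigma> x}"

lemma in_gr[simp]: "(x, y) \<in> gr \<sigma> \<longleftrightarrow> y = \<sigma> x"
  by (simp add: gr_def)

abbreviation doms :: "(var \<times> var) set list \<Rightarrow> var set" where
  "doms Rs \<equiv> \<Union> (Domain ` set Rs)"
abbreviation rans :: "(var \<times> var) set list \<Rightarrow> var set" where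
  "rans Rs \<equiv> \<Union> (Range ` set Rs)"

inductive fa :: "(var \<times> var) set \<Rightarrow> (var \<times> var) set list \<Rightarrow> fm \<Rightarrow> fm \<Rightarrow> bool" for \<rho> where
  fpred: "list_all2 (trel (veq \<rho> Rs)) ts ss \<Longrightarrow> fa \<rho> Rs (Pred p ts) (Pred p ss)"
| fimp: "fa \<rho> Rs A C \<Longrightarrow> fa \<rho> Rs B D \<Longrightarrow> fa \<rho> Rs (Imp A B) (Imp C D)"
| fall: "fa \<rho> ({(x, y)} # Rs) A B \<Longrightarrow> fa \<rho> Rs (All x A) (All y B)"

inductive_cases fa_PredE: "fa \<rho> Rs (Pred p ts) C"
inductive_cases fa_ImpE: "fa \<rho> Rs (Imp A B) C"
inductive_cases fa_AllE: "fa \<rho> Rs (All x A) C"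

lemma alpha_fm_fa1: "alpha_fm Rs A B \<Longrightarrow> fa Id Rs A B"
proof (induction rule: alpha_fm.induct)
  case (1 ts ss Rs p)
  then show ?case by (auto intro!: fa.fpred alpha_trm_trel simp: list_all2_conv_all_nth)
qed (auto intro: fa.intros)

lemma alpha_fm_fa2: "fa Id Rs A B \<Longrightarrow> alpha_fm Rs A B"
proof (induction rule: fa.induct)
  case (fpred Rs ts ss p)
  then show ?case by (auto intro!: alpha_fm.intros trel_alpha_trm simp: list_all2_conv_all_nth)
qed (auto intro: alpha_fm.intros)

lemma alpha_fm_fa: "alpha_fm Rs A B = fa Id Rs A B"
  using alpha_fm_fa1 alpha_fm_fa2 by blast

lemma veq_conv: "veq \<rho> Rs x y \<Longrightarrow> veq (\<rho>\<inverse>) (map converse Rs) y x"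
  by (induction Rs) auto

lemma fa_conv: "fa \<rho> Rs A B \<Longrightarrow> fa (\<rho>\<inverse>) (map converse Rs) B A"
proof (induction rule: fa.induct)
  case (fpred Rs ts ss p)
  have "list_all2 (trel (veq (\<rho>\<inverse>) (map converse Rs))) ss ts"
    using fpred unfolding list_all2_conv_all_nth
  proof (intro conjI allI impI)
    fix i assume "length ts = length ss \<and> (\<forall>i<length ts. trel (veq \<rho> Rs) (ts ! i) (ss ! i))" "i < length ss"
    then have "trel (\<lambda>x y. veq \<rho> Rs y x) (ss ! i) (ts ! i)" by (auto intro: trel_conv)
    then show "trel (veq (\<rho>\<inverse>) (map converse Rs)) (ss ! i) (ts ! i)"
      by (rule trel_mono) (rule veq_conv)
  qed simp
  then show ?case by (rule fa.fpred)
next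
  case (fall x y Rs A B)
  have "{(x, y)}\<inverse> = {(y, x)}" by auto
  then show ?case using fall by (auto intro: fa.fall)
qed (auto intro: fa.intros)

lemma veq_comp:
  "list_all2 (\<lambda>R S. Range R = Domain S) Rs Ss \<Longrightarrow> veq \<rho> Rs x y \<Longrightarrow> veq \<rho>' Ss y z
   \<Longrightarrow> veq (\<rho> O \<rho>') (map2 (O) Rs Ss) x z"
proof (induction arbitrary: x y z rule: list_all2_induct)
  case Nil then show ?case by auto
next
  case (Cons R Rs S Ss)
  have RS: "Range R = Domain S" by fact
  have p1: "if x \<in> Domain R \<or> y \<in> Range R then (x, y) \<in> R else veq \<rho> Rs x y"
    using Cons.prems(1) by simp
  have p2: "if y \<in> Domain S \<or> z \<in> Range S then (y, z) \<in> S else veq \<rho>' Ss y z"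
    using Cons.prems(2) by simp
  have goal: "veq (\<rho> O \<rho>') (map2 (O) (R # Rs) (S # Ss)) x z =
     (if x \<in> Domain (R O S) \<or> z \<in> Range (R O S) then (x, z) \<in> R O S else veq (\<rho> O \<rho>') (map2 (O) Rs Ss) x z)"
    by simp
  show ?case
  proof (cases "x \<in> Domain R \<or> y \<in> Range R")
    case True
    then have xy: "(x, y) \<in> R" using p1 by presburger
    then have "y \<in> Domain S" using RS by blast
    then have "(y, z) \<in> S" using p2 by presburger
    with xy have "(x, z) \<in> R O S" by blast
    moreover then have "x \<in> Domain (R O S)" by blast
    ultimately show ?thesis unfolding goal by simp
  next
    case False
    then have r: "veq \<rho> Rs x y" using p1 by presburger
    have "y \<notin> Domain S" using False RS by blast
    moreover have "\<not> (z \<in> Range S \<and> (y, z) \<in> S)" using \<open>y \<notin> Domain S\<close> by blast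
    ultimately have s: "z \<notin> Range S" "veq \<rho>' Ss y z" using p2 by (metis)+
    have "x \<notin> Domain (R O S)" using False by blast
    moreover have "z \<notin> Range (R O S)" using s(1) by blast
    ultimately show ?thesis unfolding goal using Cons.IH[OF r s(2)] by simp
  qed
qed

lemma fa_comp_aux:
  "fa \<rho> Rs A B \<Longrightarrow> \<forall>Ss C. fa \<rho>' Ss B C \<longrightarrow> list_all2 (\<lambda>R S. Range R = Domain S) Rs Ss
     \<longrightarrow> fa (\<rho> O \<rho>') (map2 (O) Rs Ss) A C"
proof (induction rule: fa.induct)
  case (fpred Rs ts ss p)
  show ?case
  proof (intro allI impI)
    fix Ss C assume C: "fa \<rho>' Ss (Pred p ss) C" and L: "list_all2 (\<lambda>R S. Range R = Domain S) Rs Ss"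
    then obtain us where us: "C = Pred p us" "list_all2 (trel (veq \<rho>' Ss)) ss us"
      by (auto elim: fa_PredE)
    have "list_all2 (trel (veq (\<rho> O \<rho>') (map2 (O) Rs Ss))) ts us"
      unfolding list_all2_conv_all_nth
    proof (intro conjI allI impI)
      show "length ts = length us" using fpred us(2) by (simp add: list_all2_lengthD)
      fix i assume i: "i < length ts"
      have "trel (veq \<rho> Rs) (ts ! i) (ss ! i)" using list_all2_nthD[OF fpred i] .
      moreover have "trel (veq \<rho>' Ss) (ss ! i) (us ! i)"
        using list_all2_nthD[OF us(2)] i fpred by (simp add: list_all2_lengthD)
      ultimately have "trel (veq \<rho> Rs OO veq \<rho>' Ss) (ts ! i) (us ! i)" by (rule trel_comp)
      then show "trel (veq (\<rho> O \<rho>') (map2 (O) Rs Ss)) (ts ! i) (us ! i)"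
        by (rule trel_mono) (auto intro: veq_comp[OF L])
    qed
    then show "fa (\<rho> O \<rho>') (map2 (O) Rs Ss) (Pred p ts) C"
      unfolding us(1) by (rule fa.fpred)
  qed
next
  case (fimp Rs A C' B D)
  show ?case
  proof (intro allI impI)
    fix Ss C assume C: "fa \<rho>' Ss (Imp C' D) C" and L: "list_all2 (\<lambda>R S. Range R = Domain S) Rs Ss"
    then obtain C1 C2 where "C = Imp C1 C2" "fa \<rho>' Ss C' C1" "fa \<rho>' Ss D C2"
      by (auto elim: fa_ImpE)
    then show "fa (\<rho> O \<rho>') (map2 (O) Rs Ss) (Imp A B) C"
      using fimp.IH L by (auto intro!: fa.fimp)
  qed
next
  case (fall x y Rs A B)
  show ?case
  proof (intro allI impI)
    fix Ss C assume C: "fa \<rho>' Ss (All y B) C" and L: "list_all2 (\<lambda>R S. Range R = Domain S) Rs Ss"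
    then obtain z C' where C': "C = All z C'" "fa \<rho>' ({(y, z)} # Ss) B C'"
      by (auto elim: fa_AllE)
    have "list_all2 (\<lambda>R S. Range R = Domain S) ({(x, y)} # Rs) ({(y, z)} # Ss)"
      using L by auto
    then have "fa (\<rho> O \<rho>') (map2 (O) ({(x, y)} # Rs) ({(y, z)} # Ss)) A C'"
      using fall.IH C'(2) by blast
    moreover have "{(x, y)} O {(y, z)} = {(x, z)}" by auto
    ultimately show "fa (\<rho> O \<rho>') (map2 (O) Rs Ss) (All x A) C"
      unfolding C'(1) by (auto intro: fa.fall)
  qed
qed

lemma fa_comp:
  "fa \<rho> Rs A B \<Longrightarrow> fa \<rho>' Ss B C \<Longrightarrow> list_all2 (\<lambda>R S. Range R = Domain S) Rs Ss
     \<Longrightarrow> fa (\<rho> O \<rho>') (map2 (O) Rs Ss) A C"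
  using fa_comp_aux by blast

lemma veq_mono_aux: "veq \<rho> Rs x y \<longrightarrow> (x \<notin> doms Rs \<longrightarrow> (x, y) \<in> \<rho> \<longrightarrow> (x, y) \<in> \<rho>') \<longrightarrow> veq \<rho>' Rs x y"
proof (induction Rs)
  case Nil then show ?case by simp
next
  case (Cons R Rs)
  show ?case
  proof (cases "x \<in> Domain R \<or> y \<in> Range R")
    case True then show ?thesis by simp
  next
    case False
    then have e: "veq \<rho> (R # Rs) x y = veq \<rho> Rs x y" "veq \<rho>' (R # Rs) x y = veq \<rho>' Rs x y" by simp_all
    have "x \<notin> doms (R # Rs) \<longleftrightarrow> x \<notin> doms Rs" using False by simp
    then show ?thesis unfolding e using Cons.IH by blast
  qed
qed

lemma veq_mono: "veq \<rho> Rs x y \<Longrightarrow> (x \<notin> doms Rs \<Longrightarrow> (x, y) \<in> \<rho> \<Longrightarrow> (x, y) \<in> \<rho>') \<Longrightarrow> veq \<rho>' Rs x y"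
  using veq_mono_aux by blast

lemma fa_mono_aux:
  "fa \<rho> Rs A B \<Longrightarrow> (\<forall>x\<in>fv_fm A. x \<notin> doms Rs \<longrightarrow> (\<forall>y. (x, y) \<in> \<rho> \<longrightarrow> (x, y) \<in> \<rho>')) \<longrightarrow> fa \<rho>' Rs A B"
proof (induction rule: fa.induct)
  case (fpred Rs ts ss p)
  show ?case
  proof
    assume h: "\<forall>x\<in>fv_fm (Pred p ts). x \<notin> doms Rs \<longrightarrow> (\<forall>y. (x, y) \<in> \<rho> \<longrightarrow> (x, y) \<in> \<rho>')"
    have "list_all2 (trel (veq \<rho>' Rs)) ts ss"
      using fpred unfolding list_all2_conv_all_nth
    proof (intro conjI allI impI)
      fix i assume A1: "length ts = length ss \<and> (\<forall>i<length ts. trel (veq \<rho> Rs) (ts ! i) (ss ! i))" and "i < length ts"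
      have hh: "\<forall>x\<in>fv_trm (ts ! i). x \<notin> doms Rs \<longrightarrow> (\<forall>y. (x, y) \<in> \<rho> \<longrightarrow> (x, y) \<in> \<rho>')"
      proof (intro ballI impI allI)
        fix x y assume "x \<in> fv_trm (ts ! i)" "x \<notin> doms Rs" "(x, y) \<in> \<rho>"
        moreover have "x \<in> fv_fm (Pred p ts)" using nth_mem[OF \<open>i < length ts\<close>] \<open>x \<in> fv_trm (ts ! i)\<close> by auto
        ultimately show "(x, y) \<in> \<rho>'" using h by blast
      qed
      have tr: "trel (veq \<rho> Rs) (ts ! i) (ss ! i)" using A1 \<open>i < length ts\<close> by simp
      show "trel (veq \<rho>' Rs) (ts ! i) (ss ! i)"
      proof (rule trel_mono[OF tr])
        fix x y assume "x \<in> fv_trm (ts ! i)" "veq \<rho> Rs x y"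
        show "veq \<rho>' Rs x y"
        proof (rule veq_mono[OF \<open>veq \<rho> Rs x y\<close>])
          assume "x \<notin> doms Rs" "(x, y) \<in> \<rho>"
          then show "(x, y) \<in> \<rho>'" using hh \<open>x \<in> fv_trm (ts ! i)\<close> by blast
        qed
      qed
    qed simp
    then show "fa \<rho>' Rs (Pred p ts) (Pred p ss)" by (rule fa.fpred)
  qed
next
  case (fimp Rs A C B D)
  show ?case
  proof
    assume h: "\<forall>x\<in>fv_fm (Imp A B). x \<notin> doms Rs \<longrightarrow> (\<forall>y. (x, y) \<in> \<rho> \<longrightarrow> (x, y) \<in> \<rho>')"
    then have "fa \<rho>' Rs A C" "fa \<rho>' Rs B D" using fimp.IH by simp_all
    then show "fa \<rho>' Rs (Imp A B) (Imp C D)" by (rule fa.fimp)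
  qed
next
  case (fall x y Rs A B)
  show ?case
  proof
    assume h: "\<forall>v\<in>fv_fm (All x A). v \<notin> doms Rs \<longrightarrow> (\<forall>w. (v, w) \<in> \<rho> \<longrightarrow> (v, w) \<in> \<rho>')"
    have "\<forall>v\<in>fv_fm A. v \<notin> doms ({(x, y)} # Rs) \<longrightarrow> (\<forall>w. (v, w) \<in> \<rho> \<longrightarrow> (v, w) \<in> \<rho>')"
    proof (intro ballI impI allI)
      fix v w assume "v \<in> fv_fm A" "v \<notin> doms ({(x, y)} # Rs)" "(v, w) \<in> \<rho>"
      moreover then have "v \<in> fv_fm (All x A)" "v \<notin> doms Rs" by auto
      ultimately show "(v, w) \<in> \<rho>'" using h by blast
    qed
    then have "fa \<rho>' ({(x, y)} # Rs) A B" using fall.IH by blast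
    then show "fa \<rho>' Rs (All x A) (All y B)" by (rule fa.fall)
  qed
qed

lemma fa_mono:
  "fa \<rho> Rs A B \<Longrightarrow> (\<And>x y. x \<in> fv_fm A \<Longrightarrow> x \<notin> doms Rs \<Longrightarrow> (x, y) \<in> \<rho> \<Longrightarrow> (x, y) \<in> \<rho>') \<Longrightarrow> fa \<rho>' Rs A B"
  using fa_mono_aux by blast

lemma veq_fv: "veq \<rho> Rs x y \<Longrightarrow> x \<notin> doms Rs \<Longrightarrow> (x, y) \<in> \<rho> \<and> y \<notin> rans Rs"
proof (induction Rs)
  case Nil then show ?case by simp
next
  case (Cons R Rs)
  show ?case
  proof (cases "x \<in> Domain R \<or> y \<in> Range R")
    case True
    then have "(x, y) \<in> R" using Cons.prems(1) by simp
    then have "x \<in> Domain R" by blast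
    then show ?thesis using Cons.prems(2) by simp
  next
    case False
    then have e: "veq \<rho> (R # Rs) x y = veq \<rho> Rs x y" by simp
    have "x \<notin> doms Rs" using Cons.prems(2) by simp
    then have "(x, y) \<in> \<rho> \<and> y \<notin> rans Rs" using Cons.IH Cons.prems(1) unfolding e by blast
    then show ?thesis using False by simp
  qed
qed

lemma fa_fv: "fa \<rho> Rs A B \<Longrightarrow> x \<in> fv_fm A \<Longrightarrow> x \<notin> doms Rs \<Longrightarrow> \<exists>y\<in>fv_fm B. (x, y) \<in> \<rho> \<and> y \<notin> rans Rs"
proof (induction arbitrary: x rule: fa.induct)
  case (fpred Rs ts ss p)
  then obtain i where i: "i < length ts" "x \<in> fv_trm (ts ! i)"
    by (auto simp: in_set_conv_nth)
  have "trel (veq \<rho> Rs) (ts ! i) (ss ! i)" "i < length ss"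
    using fpred(1) i(1) unfolding list_all2_conv_all_nth by auto
  then obtain y where "y \<in> fv_trm (ss ! i)" "veq \<rho> Rs x y" using trel_fv i(2) by blast
  moreover have "ss ! i \<in> set ss" using \<open>i < length ss\<close> by simp
  moreover have "(x, y) \<in> \<rho> \<and> y \<notin> rans Rs" using veq_fv[OF \<open>veq \<rho> Rs x y\<close> fpred.prems(2)] .
  ultimately show ?case by auto
next
  case (fimp Rs A C B D)
  from fimp.prems(1) have "x \<in> fv_fm A \<or> x \<in> fv_fm B" by simp
  then show ?case
  proof
    assume "x \<in> fv_fm A"
    then obtain y where "y\<in>fv_fm C" "(x, y) \<in> \<rho> \<and> y \<notin> rans Rs" using fimp.IH(1) fimp.prems(2) by blast
    then show ?thesis by auto
  next
    assume "x \<in> fv_fm B"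
    then obtain y where "y\<in>fv_fm D" "(x, y) \<in> \<rho> \<and> y \<notin> rans Rs" using fimp.IH(2) fimp.prems(2) by blast
    then show ?thesis by auto
  qed
next
  case (fall x' y' Rs A B)
  then have "x \<noteq> x'" "x \<in> fv_fm A" by auto
  moreover have "x \<notin> doms ({(x', y')} # Rs)" using fall.prems(2) \<open>x \<noteq> x'\<close> by simp
  ultimately obtain y where "y\<in>fv_fm B" "(x, y) \<in> \<rho>" "y \<notin> rans ({(x', y')} # Rs)"
    using fall.IH[of x] by blast
  then show ?case by auto
qed

lemma ex_list_all2: "(\<forall>t\<in>set ts. \<exists>s. P t s) \<Longrightarrow> \<exists>ss. list_all2 P ts ss"
  by (induction ts) auto

lemma veq_ex:
  "distinct (map snd qs) \<Longrightarrow> (v \<notin> fst ` set qs \<longrightarrow> \<sigma> v \<notin> snd ` set qs) \<Longrightarrow>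
   \<exists>w. veq (gr \<sigma>) (map (\<lambda>q. {q}) qs) v w \<and> (w \<in> snd ` set qs \<or> (v \<notin> fst ` set qs \<and> w = \<sigma> v))"
proof (induction qs)
  case Nil then show ?case by simp
next
  case (Cons q qs)
  obtain a b where q: "q = (a, b)" by (cases q)
  show ?case
  proof (cases "v = a")
    case True then show ?thesis using q by auto
  next
    case False
    have "distinct (map snd qs)" "v \<notin> fst ` set qs \<longrightarrow> \<sigma> v \<notin> snd ` set qs"
      using Cons.prems False q by auto
    then obtain w where w: "veq (gr \<sigma>) (map (\<lambda>q. {q}) qs) v w" "w \<in> snd ` set qs \<or> (v \<notin> fst ` set qs \<and> w = \<sigma> v)"
      using Cons.IH by blast
    have "w \<noteq> b" using w(2) Cons.prems False q by force
    then show ?thesis using w False q by auto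
  qed
qed

lemma fa_ex:
  "\<forall>qs. distinct (map snd qs) \<longrightarrow> (\<forall>v\<in>fv_fm A. v \<notin> fst ` set qs \<longrightarrow> \<sigma> v \<notin> snd ` set qs)
     \<longrightarrow> (\<exists>B. fa (gr \<sigma>) (map (\<lambda>q. {q}) qs) A B)"
proof (induction A)
  case (Pred p ts)
  show ?case
  proof (intro allI impI)
    fix qs assume d: "distinct (map snd qs)" and h: "\<forall>v\<in>fv_fm (Pred p ts). v \<notin> fst ` set qs \<longrightarrow> \<sigma> v \<notin> snd ` set qs"
    have "\<forall>t\<in>set ts. \<exists>s. trel (veq (gr \<sigma>) (map (\<lambda>q. {q}) qs)) t s"
    proof
      fix t assume t: "t \<in> set ts"
      show "\<exists>s. trel (veq (gr \<sigma>) (map (\<lambda>q. {q}) qs)) t s"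
      proof (rule trel_ex, rule)
        fix x assume "x \<in> fv_trm t"
        then have "x \<notin> fst ` set qs \<longrightarrow> \<sigma> x \<notin> snd ` set qs" using h t by auto
        then show "\<exists>y. veq (gr \<sigma>) (map (\<lambda>q. {q}) qs) x y" using veq_ex[OF d] by blast
      qed
    qed
    then obtain ss where "list_all2 (trel (veq (gr \<sigma>) (map (\<lambda>q. {q}) qs))) ts ss"
      using ex_list_all2 by blast
    then show "\<exists>B. fa (gr \<sigma>) (map (\<lambda>q. {q}) qs) (Pred p ts) B" by (auto intro: fa.fpred)
  qed
next
  case (Imp A1 A2)
  show ?case
  proof (intro allI impI)
    fix qs assume "distinct (map snd qs)" "\<forall>v\<in>fv_fm (Imp A1 A2). v \<notin> fst ` set qs \<longrightarrow> \<sigma> v \<notin> snd ` set qs"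
    then obtain B1 B2 where "fa (gr \<sigma>) (map (\<lambda>q. {q}) qs) A1 B1" "fa (gr \<sigma>) (map (\<lambda>q. {q}) qs) A2 B2"
      using Imp.IH by (metis UnCI fv_fm.simps(2))
    then show "\<exists>B. fa (gr \<sigma>) (map (\<lambda>q. {q}) qs) (Imp A1 A2) B" by (blast intro: fa.fimp)
  qed
next
  case (All x A)
  show ?case
  proof (intro allI impI)
    fix qs assume d: "distinct (map snd qs)" and h: "\<forall>v\<in>fv_fm (All x A). v \<notin> fst ` set qs \<longrightarrow> \<sigma> v \<notin> snd ` set qs"
    have "finite (snd ` set qs \<union> \<sigma> ` fv_fm A)" using finite_fv_fm by auto
    then obtain b where b: "b \<notin> snd ` set qs \<union> \<sigma> ` fv_fm A"
      using ex_new_if_finite[OF infinite_UNIV_nat] by blast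
    have "distinct (map snd ((x, b) # qs))" using d b by auto
    moreover have "\<forall>v\<in>fv_fm A. v \<notin> fst ` set ((x, b) # qs) \<longrightarrow> \<sigma> v \<notin> snd ` set ((x, b) # qs)"
      using h b by auto
    ultimately obtain B where "fa (gr \<sigma>) (map (\<lambda>q. {q}) ((x, b) # qs)) A B" using All.IH by blast
    then show "\<exists>B. fa (gr \<sigma>) (map (\<lambda>q. {q}) qs) (All x A) B" by (auto intro: fa.fall)
  qed
qed

lemma fa_ex0: "\<exists>B. fa (gr \<sigma>) [] A B"
  using fa_ex[of A \<sigma>] by (metis distinct.simps(1) empty_iff image_empty list.map(1) list.set(1))

lemma fa_imps_inv: "fa \<rho> Rs (imps As P) C \<Longrightarrow> \<exists>Cs Q. C = imps Cs Q \<and> list_all2 (fa \<rho> Rs) As Cs \<and> fa \<rho> Rs P Q"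
proof (induction As arbitrary: C)
  case Nil then show ?case by force
next
  case (Cons A As)
  from Cons.prems have "fa \<rho> Rs (Imp A (imps As P)) C" by simp
  then obtain C1 C2 where c: "C = Imp C1 C2" "fa \<rho> Rs A C1" "fa \<rho> Rs (imps As P) C2"
    by (rule fa_ImpE) blast
  from Cons.IH[OF c(3)] obtain Cs Q where "C2 = imps Cs Q" "list_all2 (fa \<rho> Rs) As Cs" "fa \<rho> Rs P Q"
    by blast
  then have "C = imps (C1 # Cs) Q" "list_all2 (fa \<rho> Rs) (A # As) (C1 # Cs)" using c by auto
  then show ?case using \<open>fa \<rho> Rs P Q\<close> by blast
qed

lemma veq_refl: "\<forall>R\<in>set Rs. R \<subseteq> Id \<Longrightarrow> veq Id Rs x x"
  by (induction Rs) auto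

lemma fa_refl_aux: "\<forall>Rs. (\<forall>R\<in>set Rs. R \<subseteq> Id) \<longrightarrow> fa Id Rs A A"
proof (induction A)
  case (Pred p ts)
  show ?case
  proof (intro allI impI)
    fix Rs :: "(var \<times> var) set list" assume h: "\<forall>R\<in>set Rs. R \<subseteq> Id"
    have "list_all2 (trel (veq Id Rs)) ts ts" unfolding list_all2_conv_all_nth
      using h by (auto intro!: trel_refl veq_refl)
    then show "fa Id Rs (Pred p ts) (Pred p ts)" by (rule fa.fpred)
  qed
next
  case (Imp A1 A2)
  show ?case
  proof (intro allI impI)
    fix Rs :: "(var \<times> var) set list" assume h: "\<forall>R\<in>set Rs. R \<subseteq> Id"
    then have "fa Id Rs A1 A1" "fa Id Rs A2 A2" using Imp.IH by blast+
    then show "fa Id Rs (Imp A1 A2) (Imp A1 A2)" by (rule fa.fimp)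
  qed
next
  case (All x A)
  show ?case
  proof (intro allI impI)
    fix Rs :: "(var \<times> var) set list" assume h: "\<forall>R\<in>set Rs. R \<subseteq> Id"
    then have "\<forall>R\<in>set ({(x, x)} # Rs). R \<subseteq> Id" by auto
    then have "fa Id ({(x, x)} # Rs) A A" using All.IH by blast
    then show "fa Id Rs (All x A) (All x A)" by (rule fa.fall)
  qed
qed

lemma fa_refl: "fa Id [] A A"
  using fa_refl_aux by auto

lemma alpha_refl: "alpha_fm [] A A"
  using fa_refl alpha_fm_fa by auto

lemma fa_refl_gr: "(\<And>x. x \<in> fv_fm A \<Longrightarrow> \<sigma> x = x) \<Longrightarrow> fa (gr \<sigma>) [] A A"
  by (rule fa_mono[OF fa_refl]) auto

lemma fa_pred_det:
  assumes "fa (gr \<sigma>) [] (Pred p ts) C" "fa (gr \<sigma>) [] (Pred p ts) D"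
  shows "C = D"
proof -
  obtain ss where C: "C = Pred p ss" "list_all2 (trel (veq (gr \<sigma>) [])) ts ss"
    using assms(1) by (auto elim: fa_PredE)
  obtain us where D: "D = Pred p us" "list_all2 (trel (veq (gr \<sigma>) [])) ts us"
    using assms(2) by (auto elim: fa_PredE)
  have "ss = us"
  proof (rule nth_equalityI)
    show "length ss = length us" using C D by (simp add: list_all2_lengthD[symmetric])
    fix i assume "i < length ss"
    then have "trel (veq (gr \<sigma>) []) (ts ! i) (ss ! i)" "trel (veq (gr \<sigma>) []) (ts ! i) (us ! i)"
      using C D unfolding list_all2_conv_all_nth by auto
    then show "ss ! i = us ! i" using trel_fun_aux by fastforce
  qed
  then show ?thesis using C D by simp
qed



lemma alpha_comp_gr: "alpha_fm [] F G \<Longrightarrow> fa (gr \<sigma>) [] F H \<Longrightarrow> fa (gr \<sigma>) [] G H"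
proof -
  assume a: "alpha_fm [] F G" and b: "fa (gr \<sigma>) [] F H"
  have "fa Id [] F G" using a alpha_fm_fa by simp
  then have "fa (Id\<inverse>) (map converse []) G F" by (rule fa_conv)
  then have c: "fa Id [] G F" by simp
  show ?thesis using fa_comp[OF c b] by simp
qed

lemma veq_push_aux:
  "veq (gr \<tau>) Qs v w \<longrightarrow> (v \<notin> doms Qs \<longrightarrow> v \<noteq> x \<longrightarrow> \<tau> v = \<sigma> v \<and> \<sigma> v \<noteq> z) \<longrightarrow> \<tau> x = z
    \<longrightarrow> veq (gr \<sigma>) (Qs @ [{(x, z)}]) v w"
proof (induction Qs)
  case Nil
  show ?case
  proof (intro impI)
    assume "veq (gr \<tau>) [] v w" "v \<notin> doms [] \<longrightarrow> v \<noteq> x \<longrightarrow> \<tau> v = \<sigma> v \<and> \<sigma> v \<noteq> z" "\<tau> x = z"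
    then show "veq (gr \<sigma>) ([] @ [{(x, z)}]) v w" by (cases "v = x") auto
  qed
next
  case (Cons Q Qs)
  show ?case
  proof (cases "v \<in> Domain Q \<or> w \<in> Range Q")
    case True then show ?thesis by simp
  next
    case False
    then have e: "veq (gr \<tau>) (Q # Qs) v w = veq (gr \<tau>) Qs v w"
      "veq (gr \<sigma>) ((Q # Qs) @ [{(x, z)}]) v w = veq (gr \<sigma>) (Qs @ [{(x, z)}]) v w" by simp_all
    have "v \<notin> doms (Q # Qs) \<longleftrightarrow> v \<notin> doms Qs" using False by simp
    then show ?thesis unfolding e using Cons.IH by blast
  qed
qed

lemma fa_push_aux:
  "fa (gr \<tau>) Qs A B \<Longrightarrow> (\<forall>v\<in>fv_fm A. v \<notin> doms Qs \<longrightarrow> v \<noteq> x \<longrightarrow> \<tau> v = \<sigma> v \<and> \<sigma> v \<noteq> z) \<longrightarrow> \<tau> x = z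
    \<longrightarrow> fa (gr \<sigma>) (Qs @ [{(x, z)}]) A B"
proof (induction rule: fa.induct)
  case (fpred Rs ts ss p)
  show ?case
  proof (intro impI)
    assume h: "\<forall>v\<in>fv_fm (Pred p ts). v \<notin> doms Rs \<longrightarrow> v \<noteq> x \<longrightarrow> \<tau> v = \<sigma> v \<and> \<sigma> v \<noteq> z" and tx: "\<tau> x = z"
    have "list_all2 (trel (veq (gr \<sigma>) (Rs @ [{(x, z)}]))) ts ss"
      unfolding list_all2_conv_all_nth
    proof (intro conjI allI impI)
      show "length ts = length ss" using fpred by (rule list_all2_lengthD)
      fix i assume i: "i < length ts"
      have tr: "trel (veq (gr \<tau>) Rs) (ts ! i) (ss ! i)" using list_all2_nthD[OF fpred i] .
      show "trel (veq (gr \<sigma>) (Rs @ [{(x, z)}])) (ts ! i) (ss ! i)"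
      proof (rule trel_mono[OF tr])
        fix v w assume v: "v \<in> fv_trm (ts ! i)" and vw: "veq (gr \<tau>) Rs v w"
        have "v \<in> fv_fm (Pred p ts)" using v nth_mem[OF i] by auto
        then have "v \<notin> doms Rs \<longrightarrow> v \<noteq> x \<longrightarrow> \<tau> v = \<sigma> v \<and> \<sigma> v \<noteq> z" using h by blast
        then show "veq (gr \<sigma>) (Rs @ [{(x, z)}]) v w" using veq_push_aux vw tx by blast
      qed
    qed
    then show "fa (gr \<sigma>) (Rs @ [{(x, z)}]) (Pred p ts) (Pred p ss)" by (rule fa.fpred)
  qed
next
  case (fimp Rs A C B D)
  show ?case
  proof (intro impI)
    assume h: "\<forall>v\<in>fv_fm (Imp A B). v \<notin> doms Rs \<longrightarrow> v \<noteq> x \<longrightarrow> \<tau> v = \<sigma> v \<and> \<sigma> v \<noteq> z" and tx: "\<tau> x = z"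
    then have "fa (gr \<sigma>) (Rs @ [{(x, z)}]) A C" "fa (gr \<sigma>) (Rs @ [{(x, z)}]) B D" using fimp.IH by simp_all
    then show "fa (gr \<sigma>) (Rs @ [{(x, z)}]) (Imp A B) (Imp C D)" by (rule fa.fimp)
  qed
next
  case (fall x' y' Rs A B)
  show ?case
  proof (intro impI)
    assume h: "\<forall>v\<in>fv_fm (All x' A). v \<notin> doms Rs \<longrightarrow> v \<noteq> x \<longrightarrow> \<tau> v = \<sigma> v \<and> \<sigma> v \<noteq> z" and tx: "\<tau> x = z"
    have "\<forall>v\<in>fv_fm A. v \<notin> doms ({(x', y')} # Rs) \<longrightarrow> v \<noteq> x \<longrightarrow> \<tau> v = \<sigma> v \<and> \<sigma> v \<noteq> z"
    proof (intro ballI impI)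
      fix v assume "v \<in> fv_fm A" "v \<notin> doms ({(x', y')} # Rs)" "v \<noteq> x"
      moreover then have "v \<in> fv_fm (All x' A)" "v \<notin> doms Rs" by auto
      ultimately show "\<tau> v = \<sigma> v \<and> \<sigma> v \<noteq> z" using h by blast
    qed
    then have "fa (gr \<sigma>) (({(x', y')} # Rs) @ [{(x, z)}]) A B" using fall.IH tx by blast
    then show "fa (gr \<sigma>) (Rs @ [{(x, z)}]) (All x' A) (All y' B)" by (auto intro: fa.fall)
  qed
qed

definition rel :: "(var \<Rightarrow> var) \<Rightarrow> fm multiset \<Rightarrow> fm multiset \<Rightarrow> bool" where
  "rel \<sigma> \<Delta> \<Delta>' \<longleftrightarrow> (\<forall>F\<in>#\<Delta>. \<exists>F'\<in>#\<Delta>'. fa (gr \<sigma>) [] F F')"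

lemma finite_fv_mset: "finite (fv_mset \<Delta>)"
  unfolding fv_mset_def by (simp add: finite_fv_fm)

lemma lj_rename_aux: "lj \<Delta> E h \<Longrightarrow> \<forall>\<sigma> \<Delta>' E'. rel \<sigma> \<Delta> \<Delta>' \<longrightarrow> fa (gr \<sigma>) [] E E' \<longrightarrow> lj \<Delta>' E' h"
proof (induction rule: lj.induct)
  case (L_imp F \<Delta> As p ts hs)
  show ?case
  proof (intro allI impI)
    fix \<sigma> \<Delta>' E' assume r: "rel \<sigma> \<Delta> \<Delta>'" and e: "fa (gr \<sigma>) [] (Pred p ts) E'"
    obtain F' where F': "F' \<in># \<Delta>'" "fa (gr \<sigma>) [] F F'" using r L_imp(1) unfolding rel_def by blast
    have "fa (gr \<sigma>) [] (imps As (Pred p ts)) F'" using alpha_comp_gr[OF L_imp(2) F'(2)] .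
    then obtain Cs Q where cq: "F' = imps Cs Q" "list_all2 (fa (gr \<sigma>) []) As Cs" "fa (gr \<sigma>) [] (Pred p ts) Q"
      using fa_imps_inv by blast
    have QE: "Q = E'" using fa_pred_det[OF cq(3) e] .
    obtain ss where E': "E' = Pred p ss" using e by (auto elim: fa_PredE)
    have al: "alpha_fm [] F' (imps Cs (Pred p ss))" using cq(1) QE E' alpha_refl by simp
    have len: "length hs = length Cs" using L_imp(3) cq(2) by (simp add: list_all2_lengthD)
    have all: "\<forall>i<length Cs. lj \<Delta>' (Cs ! i) (hs ! i)"
    proof (intro allI impI)
      fix i assume i: "i < length Cs"
      then have ia: "i < length As" using cq(2) by (simp add: list_all2_lengthD)
      have f: "fa (gr \<sigma>) [] (As ! i) (Cs ! i)" using list_all2_nthD[OF cq(2) ia] .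
      have "\<forall>\<sigma> \<Delta>' E'. rel \<sigma> \<Delta> \<Delta>' \<longrightarrow> fa (gr \<sigma>) [] (As ! i) E' \<longrightarrow> lj \<Delta>' E' (hs ! i)"
        using L_imp(4) ia by blast
      then show "lj \<Delta>' (Cs ! i) (hs ! i)" using r f by blast
    qed
    show "lj \<Delta>' E' (Suc (Max (insert 0 (set hs))))"
      unfolding E' by (rule lj.L_imp[OF F'(1) al len all])
  qed
next
  case (R_all \<Delta> A n x B)
  show ?case
  proof (intro allI impI)
    fix \<sigma> \<Delta>' E' assume r: "rel \<sigma> \<Delta> \<Delta>'" and e: "fa (gr \<sigma>) [] B E'"
    have "fa (gr \<sigma>) [] (All x A) E'" using alpha_comp_gr[OF R_all.hyps(3) e] .
    then obtain y A1 where E': "E' = All y A1" and A1: "fa (gr \<sigma>) [{(x, y)}] A A1"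
      by (auto elim: fa_AllE)
    have "finite (fv_mset \<Delta>' \<union> fv_fm E')" using finite_fv_mset finite_fv_fm by simp
    then obtain z where z: "z \<notin> fv_mset \<Delta>' \<union> fv_fm E'"
      using ex_new_if_finite[OF infinite_UNIV_nat] by blast
    define \<tau> where "\<tau> = \<sigma>(x := z)"
    obtain A2 where A2: "fa (gr \<tau>) [] A A2" using fa_ex0 by blast
    have r2: "rel \<tau> \<Delta> \<Delta>'" unfolding rel_def
    proof
      fix F assume F: "F \<in># \<Delta>"
      then obtain F' where F': "F' \<in># \<Delta>'" "fa (gr \<sigma>) [] F F'" using r unfolding rel_def by blast
      have xF: "x \<notin> fv_fm F" using R_all.hyps(2) F unfolding fv_mset_def by auto
      have "fa (gr \<tau>) [] F F'"
      proof (rule fa_mono[OF F'(2)])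
        fix v w assume "v \<in> fv_fm F" "(v, w) \<in> gr \<sigma>"
        then show "(v, w) \<in> gr \<tau>" using xF by (auto simp: \<tau>_def)
      qed
      then show "\<exists>F'\<in>#\<Delta>'. fa (gr \<tau>) [] F F'" using F' by blast
    qed
    have "\<forall>\<sigma> \<Delta>' E'. rel \<sigma> \<Delta> \<Delta>' \<longrightarrow> fa (gr \<sigma>) [] A E' \<longrightarrow> lj \<Delta>' E' n" by (rule R_all.IH)
    then have ljA2: "lj \<Delta>' A2 n" using r2 A2 by blast
    have cond: "\<forall>v\<in>fv_fm A. v \<notin> doms [] \<longrightarrow> v \<noteq> x \<longrightarrow> \<tau> v = \<sigma> v \<and> \<sigma> v \<noteq> z"
    proof (intro ballI impI)
      fix v assume v: "v \<in> fv_fm A" "v \<noteq> x"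
      then have "v \<notin> doms [{(x, y)}]" by simp
      then obtain w where "w \<in> fv_fm A1" "(v, w) \<in> gr \<sigma>" "w \<notin> rans [{(x, y)}]"
        using fa_fv[OF A1 v(1)] by blast
      then have "\<sigma> v \<in> fv_fm E'" unfolding E' by auto
      then show "\<tau> v = \<sigma> v \<and> \<sigma> v \<noteq> z" using z v(2) by (auto simp: \<tau>_def)
    qed
    have "\<tau> x = z" by (simp add: \<tau>_def)
    then have p: "fa (gr \<sigma>) ([] @ [{(x, z)}]) A A2" using fa_push_aux[OF A2] cond by blast
    have "fa ((gr \<sigma>)\<inverse>) (map converse [{(x, y)}]) A1 A" by (rule fa_conv[OF A1])
    moreover have "map converse [{(x, y)}] = [{(y, x)}]" by auto
    ultimately have c: "fa ((gr \<sigma>)\<inverse>) [{(y, x)}] A1 A" by simp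
    have p': "fa (gr \<sigma>) [{(x, z)}] A A2" using p by simp
    have "{(y, x)} O {(x, z)} = {(y, z)}" by auto
    then have "fa ((gr \<sigma>)\<inverse> O gr \<sigma>) [{(y, z)}] A1 A2"
      using fa_comp[OF c p'] by simp
    then have "fa Id [{(y, z)}] A1 A2" by (rule fa_mono) auto
    then have "fa Id [] E' (All z A2)" unfolding E' by (rule fa.fall)
    then have al: "alpha_fm [] E' (All z A2)" using alpha_fm_fa by simp
    have zz: "z \<notin> fv_mset \<Delta>'" using z by simp
    show "lj \<Delta>' E' (Suc n)" by (rule lj.R_all[OF ljA2 zz al])
  qed
next
  case (R_imp A \<Delta> B n C)
  show ?case
  proof (intro allI impI)
    fix \<sigma> \<Delta>' E' assume r: "rel \<sigma> \<Delta> \<Delta>'" and e: "fa (gr \<sigma>) [] C E'"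
    have "fa (gr \<sigma>) [] (Imp A B) E'" using alpha_comp_gr[OF R_imp.hyps(2) e] .
    then obtain A' B' where E': "E' = Imp A' B'" "fa (gr \<sigma>) [] A A'" "fa (gr \<sigma>) [] B B'"
      by (auto elim: fa_ImpE)
    have r2: "rel \<sigma> (add_mset A \<Delta>) (add_mset A' \<Delta>')" using r E'(2) unfolding rel_def by auto
    have "\<forall>\<sigma> \<Delta>' E'. rel \<sigma> (add_mset A \<Delta>) \<Delta>' \<longrightarrow> fa (gr \<sigma>) [] B E' \<longrightarrow> lj \<Delta>' E' n" by (rule R_imp.IH)
    then have "lj (add_mset A' \<Delta>') B' n" using r2 E'(3) by blast
    moreover have "alpha_fm [] E' (Imp A' B')" using E'(1) alpha_refl by simp
    ultimately show "lj \<Delta>' E' (Suc n)" by (rule lj.R_imp)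
  qed
qed

lemma lj_rename: "lj \<Delta> E h \<Longrightarrow> rel \<sigma> \<Delta> \<Delta>' \<Longrightarrow> fa (gr \<sigma>) [] E E' \<Longrightarrow> lj \<Delta>' E' h"
  using lj_rename_aux by blast



inductive ia :: "(var \<times> var) set list \<Rightarrow> item \<Rightarrow> item \<Rightarrow> bool" where
  ifm: "fa Id Rs A B \<Longrightarrow> ia Rs (Fm A) (Fm B)"
| ibrk: "bij_betw f (fset V) (fset W) \<Longrightarrow> rel_mset (ia ((\<lambda>x. (x, f x)) ` fset V # Rs)) \<Gamma> \<Delta>
    \<Longrightarrow> ia Rs (Brk V \<Gamma>) (Brk W \<Delta>)"

inductive_cases ia_FmE: "ia Rs (Fm A) J"
inductive_cases ia_BrkE: "ia Rs (Brk V \<Gamma>) J"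

lemma rel_mset_ex: "rel_mset R M N \<Longrightarrow> a \<in># M \<Longrightarrow> \<exists>b\<in>#N. R a b"
proof -
  assume "rel_mset R M N" "a \<in># M"
  then obtain xs ys where "mset xs = M" "mset ys = N" "list_all2 R xs ys" unfolding rel_mset_def by blast
  moreover then obtain i where "i < length xs" "xs ! i = a" using \<open>a \<in># M\<close> by (auto simp: in_set_conv_nth)
  ultimately show ?thesis unfolding list_all2_conv_all_nth by (metis in_set_conv_nth set_mset_mset)
qed

lemma rel_mset_mono': "rel_mset R M N \<Longrightarrow> (\<And>a b. a \<in># M \<Longrightarrow> b \<in># N \<Longrightarrow> R a b \<Longrightarrow> S a b) \<Longrightarrow> rel_mset S M N"
  using multiset.rel_mono_strong by blast

lemma rel_mset_conv: "rel_mset R M N \<Longrightarrow> rel_mset (\<lambda>a b. R b a) N M"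
proof -
  assume "rel_mset R M N"
  then obtain xs ys where "mset xs = M" "mset ys = N" "list_all2 R xs ys" unfolding rel_mset_def by blast
  moreover then have "list_all2 (\<lambda>a b. R b a) ys xs" by (auto simp: list_all2_conv_all_nth)
  ultimately show ?thesis unfolding rel_mset_def by blast
qed

lemma rel_mset_comp: "rel_mset R M N \<Longrightarrow> rel_mset S N K \<Longrightarrow> rel_mset (R OO S) M K"
  using multiset.rel_compp by (metis relcomppI)

lemma alpha_item_ia: "alpha_item Rs I J \<Longrightarrow> ia Rs I J"
proof (induction rule: alpha_item.induct)
  case (1 Rs A B) then show ?case by (auto intro: ia.ifm simp: alpha_fm_fa)
next
  case (2 f V W xs ys Rs)
  have "list_all2 (ia ((\<lambda>x. (x, f x)) ` fset V # Rs)) xs ys"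
    using 2(2,3) unfolding list_all2_conv_all_nth by blast
  then have "rel_mset (ia ((\<lambda>x. (x, f x)) ` fset V # Rs)) (mset xs) (mset ys)"
    unfolding rel_mset_def by blast
  then show ?case using 2(1) by (rule ia.ibrk[rotated])
qed

lemma alpha_ctx_rel: "alpha_ctx \<Gamma> \<Gamma>0 \<Longrightarrow> rel_mset (ia []) \<Gamma> \<Gamma>0"
  unfolding alpha_ctx_def rel_mset_def using alpha_item_ia list_all2_mono by metis

lemma lay_conv: fixes f :: "var \<Rightarrow> var" shows "bij_betw f V W \<Longrightarrow> (\<lambda>y. (y, inv_into V f y)) ` W = ((\<lambda>x. (x, f x)) ` V)\<inverse>"
proof -
  assume b: "bij_betw f V W"
  show ?thesis
  proof (rule set_eqI)
    fix p :: "var \<times> var" obtain y x where p: "p = (y, x)" by (cases p)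
    show "p \<in> (\<lambda>y. (y, inv_into V f y)) ` W \<longleftrightarrow> p \<in> ((\<lambda>x. (x, f x)) ` V)\<inverse>"
      unfolding p using b bij_betw_inv_into_left[OF b] bij_betw_inv_into_right[OF b]
        bij_betw_apply[OF bij_betw_inv_into[OF b]] bij_betw_apply[OF b]
      by auto
  qed
qed

lemma ia_conv: "ia Rs I J \<Longrightarrow> ia (map converse Rs) J I"
proof (induction rule: ia.induct)
  case (ifm Rs A B)
  then have "fa (Id\<inverse>) (map converse Rs) B A" by (rule fa_conv)
  then show ?case by (auto intro: ia.ifm)
next
  case (ibrk f V W Rs \<Gamma> \<Delta>)
  define g where "g = inv_into (fset V) f"
  have bg: "bij_betw g (fset W) (fset V)" unfolding g_def using ibrk(1) by (rule bij_betw_inv_into)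
  have lay: "(\<lambda>y. (y, g y)) ` fset W = ((\<lambda>x. (x, f x)) ` fset V)\<inverse>"
    unfolding g_def using ibrk(1) by (rule lay_conv)
  have "rel_mset (\<lambda>a b. ia ((\<lambda>x. (x, f x)) ` fset V # Rs) b a \<and> ia (map converse ((\<lambda>x. (x, f x)) ` fset V # Rs)) a b) \<Delta> \<Gamma>"
    using rel_mset_conv[OF ibrk(2)] .
  then have "rel_mset (ia ((\<lambda>y. (y, g y)) ` fset W # map converse Rs)) \<Delta> \<Gamma>"
    by (rule rel_mset_mono') (simp add: lay)
  then show ?case using bg by (rule ia.ibrk[rotated])
qed

lemma lay_comp: "bij_betw f V W \<Longrightarrow> (\<lambda>x. (x, f x)) ` V O (\<lambda>x. (x, g x)) ` W = (\<lambda>x. (x, (g \<circ> f) x)) ` V"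
  unfolding bij_betw_def by auto

lemma ia_comp_aux: "ia Rs I J \<Longrightarrow> \<forall>Ss K. ia Ss J K \<longrightarrow> list_all2 (\<lambda>R S. Range R = Domain S) Rs Ss \<longrightarrow> ia (map2 (O) Rs Ss) I K"
proof (induction rule: ia.induct)
  case (ifm Rs A B)
  show ?case
  proof (intro allI impI)
    fix Ss K assume "ia Ss (Fm B) K" and L: "list_all2 (\<lambda>R S. Range R = Domain S) Rs Ss"
    then obtain C where K: "K = Fm C" "fa Id Ss B C" by (auto elim: ia_FmE)
    have "fa (Id O Id) (map2 (O) Rs Ss) A C" by (rule fa_comp[OF ifm K(2) L])
    then show "ia (map2 (O) Rs Ss) (Fm A) K" unfolding K(1) by (auto intro: ia.ifm)
  qed
next
  case (ibrk f V W Rs \<Gamma> \<Delta>)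
  show ?case
  proof (intro allI impI)
    fix Ss K assume "ia Ss (Brk W \<Delta>) K" and L: "list_all2 (\<lambda>R S. Range R = Domain S) Rs Ss"
    then obtain g U \<Theta> where K: "K = Brk U \<Theta>" "bij_betw g (fset W) (fset U)"
      "rel_mset (ia ((\<lambda>x. (x, g x)) ` fset W # Ss)) \<Delta> \<Theta>" by (auto elim: ia_BrkE)
    have bgf: "bij_betw (g \<circ> f) (fset V) (fset U)" using ibrk(1) K(2) by (rule bij_betw_trans)
    have L2: "list_all2 (\<lambda>R S. Range R = Domain S) ((\<lambda>x. (x, f x)) ` fset V # Rs) ((\<lambda>x. (x, g x)) ` fset W # Ss)"
    proof -
      have "Range ((\<lambda>x. (x, f x)) ` fset V) = f ` fset V" by auto
      also have "\<dots> = fset W" using ibrk(1) unfolding bij_betw_def by blast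
      finally have "Range ((\<lambda>x. (x, f x)) ` fset V) = Domain ((\<lambda>x. (x, g x)) ` fset W)" by auto
      then show ?thesis using L by simp
    qed
    have lc: "(\<lambda>x. (x, f x)) ` fset V O (\<lambda>x. (x, g x)) ` fset W = (\<lambda>x. (x, (g \<circ> f) x)) ` fset V"
      using ibrk(1) by (rule lay_comp)
    have "rel_mset ((\<lambda>a b. ia ((\<lambda>x. (x, f x)) ` fset V # Rs) a b \<and>
         (\<forall>Ss K. ia Ss b K \<longrightarrow> list_all2 (\<lambda>R S. Range R = Domain S) ((\<lambda>x. (x, f x)) ` fset V # Rs) Ss \<longrightarrow>
           ia (map2 (O) ((\<lambda>x. (x, f x)) ` fset V # Rs) Ss) a K)) OO ia ((\<lambda>x. (x, g x)) ` fset W # Ss)) \<Gamma> \<Theta>"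
      by (rule rel_mset_comp[OF ibrk(2) K(3)])
    then have "rel_mset (ia ((\<lambda>x. (x, (g \<circ> f) x)) ` fset V # map2 (O) Rs Ss)) \<Gamma> \<Theta>"
    proof (rule rel_mset_mono')
      fix a c assume "((\<lambda>a b. ia ((\<lambda>x. (x, f x)) ` fset V # Rs) a b \<and>
         (\<forall>Ss K. ia Ss b K \<longrightarrow> list_all2 (\<lambda>R S. Range R = Domain S) ((\<lambda>x. (x, f x)) ` fset V # Rs) Ss \<longrightarrow>
           ia (map2 (O) ((\<lambda>x. (x, f x)) ` fset V # Rs) Ss) a K)) OO ia ((\<lambda>x. (x, g x)) ` fset W # Ss)) a c"
      then obtain b where "\<forall>Ss K. ia Ss b K \<longrightarrow> list_all2 (\<lambda>R S. Range R = Domain S) ((\<lambda>x. (x, f x)) ` fset V # Rs) Ss \<longrightarrow>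
           ia (map2 (O) ((\<lambda>x. (x, f x)) ` fset V # Rs) Ss) a K" "ia ((\<lambda>x. (x, g x)) ` fset W # Ss) b c"
        by blast
      then have "ia (map2 (O) ((\<lambda>x. (x, f x)) ` fset V # Rs) ((\<lambda>x. (x, g x)) ` fset W # Ss)) a c"
        using L2 by blast
      then show "ia ((\<lambda>x. (x, (g \<circ> f) x)) ` fset V # map2 (O) Rs Ss) a c" using lc by simp
    qed
    then show "ia (map2 (O) Rs Ss) (Brk V \<Gamma>) K" unfolding K(1) using bgf by (rule ia.ibrk[rotated])
  qed
qed

lemma ia_comp: "ia Rs I J \<Longrightarrow> ia Ss J K \<Longrightarrow> list_all2 (\<lambda>R S. Range R = Domain S) Rs Ss \<Longrightarrow> ia (map2 (O) Rs Ss) I K"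
  using ia_comp_aux by blast

lemma fv_item_Brk: "fv_item (Brk V \<Gamma>) = (\<Union>I\<in>set_mset \<Gamma>. fv_item I) - fset V"
  by simp

lemma ia_fv: "ia Rs I J \<Longrightarrow> x \<in> fv_item I \<Longrightarrow> x \<notin> doms Rs \<Longrightarrow> x \<in> fv_item J \<and> x \<notin> rans Rs"
proof (induction arbitrary: x rule: ia.induct)
  case (ifm Rs A B)
  then obtain y where "y \<in> fv_fm B" "(x, y) \<in> Id" "y \<notin> rans Rs" using fa_fv[OF ifm(1)] by fastforce
  then show ?case by simp
next
  case (ibrk f V W Rs \<Gamma> \<Delta>)
  from ibrk.prems(1) obtain I where I: "I \<in># \<Gamma>" "x \<in> fv_item I" "x \<notin> fset V" by auto
  obtain J where J: "J \<in># \<Delta>" "ia ((\<lambda>x. (x, f x)) ` fset V # Rs) I J"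
    "\<forall>x. x \<in> fv_item I \<longrightarrow> x \<notin> doms ((\<lambda>x. (x, f x)) ` fset V # Rs) \<longrightarrow>
        x \<in> fv_item J \<and> x \<notin> rans ((\<lambda>x. (x, f x)) ` fset V # Rs)"
    using rel_mset_ex[OF ibrk(2) I(1)] by blast
  have "x \<notin> doms ((\<lambda>x. (x, f x)) ` fset V # Rs)" using I(3) ibrk.prems(2) by auto
  then have "x \<in> fv_item J" "x \<notin> rans ((\<lambda>x. (x, f x)) ` fset V # Rs)" using J(3) I(2) by blast+
  moreover have "f ` fset V = fset W" using ibrk(1) unfolding bij_betw_def by blast
  ultimately show ?case using J(1) by auto
qed

lemma veq_str:
  "veq \<rho> (Qs @ R # Rs) x y \<Longrightarrow> (x \<notin> doms Qs \<Longrightarrow> x \<notin> Domain R) \<Longrightarrow> veq \<rho> (Qs @ Rs) x y"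
proof (induction Qs)
  case Nil
  then have "x \<notin> Domain R" by simp
  moreover have "(x, y) \<in> R \<Longrightarrow> x \<in> Domain R" by blast
  ultimately show ?case using Nil.prems(1) by (simp split: if_splits)
next
  case (Cons Q Qs)
  show ?case
  proof (cases "x \<in> Domain Q \<or> y \<in> Range Q")
    case True then show ?thesis using Cons.prems(1) by simp
  next
    case False
    then have "veq \<rho> (Qs @ R # Rs) x y" using Cons.prems(1) by simp
    moreover have "x \<notin> doms Qs \<Longrightarrow> x \<notin> Domain R" using Cons.prems(2) False by simp
    ultimately have "veq \<rho> (Qs @ Rs) x y" by (rule Cons.IH)
    then show ?thesis using False by simp
  qed
qed

lemma fa_str_aux:
  "fa \<rho> L A B \<Longrightarrow> \<forall>Qs. L = Qs @ R # Rs \<longrightarrow> (\<forall>x\<in>fv_fm A. x \<notin> doms Qs \<longrightarrow> x \<notin> Domain R) \<longrightarrow> fa \<rho> (Qs @ Rs) A B"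
proof (induction rule: fa.induct)
  case (fpred L ts ss p)
  show ?case
  proof (intro allI impI)
    fix Qs assume L: "L = Qs @ R # Rs" and h: "\<forall>x\<in>fv_fm (Pred p ts). x \<notin> doms Qs \<longrightarrow> x \<notin> Domain R"
    have "list_all2 (trel (veq \<rho> (Qs @ Rs))) ts ss"
      unfolding list_all2_conv_all_nth
    proof (intro conjI allI impI)
      show "length ts = length ss" using fpred by (rule list_all2_lengthD)
      fix i assume i: "i < length ts"
      have tr: "trel (veq \<rho> L) (ts ! i) (ss ! i)" using list_all2_nthD[OF fpred i] .
      show "trel (veq \<rho> (Qs @ Rs)) (ts ! i) (ss ! i)"
      proof (rule trel_mono[OF tr])
        fix v w assume v: "v \<in> fv_trm (ts ! i)" and vw: "veq \<rho> L v w"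
        have "v \<in> fv_fm (Pred p ts)" using v nth_mem[OF i] by auto
        then have "v \<notin> doms Qs \<Longrightarrow> v \<notin> Domain R" using h by blast
        then show "veq \<rho> (Qs @ Rs) v w" using veq_str vw L by blast
      qed
    qed
    then show "fa \<rho> (Qs @ Rs) (Pred p ts) (Pred p ss)" by (rule fa.fpred)
  qed
next
  case (fimp L A C B D)
  show ?case
  proof (intro allI impI)
    fix Qs assume L: "L = Qs @ R # Rs" and h: "\<forall>x\<in>fv_fm (Imp A B). x \<notin> doms Qs \<longrightarrow> x \<notin> Domain R"
    then have "fa \<rho> (Qs @ Rs) A C" "fa \<rho> (Qs @ Rs) B D" using fimp.IH by simp_all
    then show "fa \<rho> (Qs @ Rs) (Imp A B) (Imp C D)" by (rule fa.fimp)
  qed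
next
  case (fall x y L A B)
  show ?case
  proof (intro allI impI)
    fix Qs assume L: "L = Qs @ R # Rs" and h: "\<forall>v\<in>fv_fm (All x A). v \<notin> doms Qs \<longrightarrow> v \<notin> Domain R"
    have "{(x, y)} # L = ({(x, y)} # Qs) @ R # Rs" using L by simp
    moreover have "\<forall>v\<in>fv_fm A. v \<notin> doms ({(x, y)} # Qs) \<longrightarrow> v \<notin> Domain R"
    proof (intro ballI impI)
      fix v assume "v \<in> fv_fm A" "v \<notin> doms ({(x, y)} # Qs)"
      moreover then have "v \<in> fv_fm (All x A)" "v \<notin> doms Qs" by auto
      ultimately show "v \<notin> Domain R" using h by blast
    qed
    ultimately have "fa \<rho> (({(x, y)} # Qs) @ Rs) A B" using fall.IH by blast
    then show "fa \<rho> (Qs @ Rs) (All x A) (All y B)" by (auto intro: fa.fall)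
  qed
qed

lemma ia_str_aux:
  "ia L I J \<Longrightarrow> \<forall>Qs. L = Qs @ R # Rs \<longrightarrow> (\<forall>x\<in>fv_item I. x \<notin> doms Qs \<longrightarrow> x \<notin> Domain R) \<longrightarrow> ia (Qs @ Rs) I J"
proof (induction rule: ia.induct)
  case (ifm L A B)
  show ?case
  proof (intro allI impI)
    fix Qs assume "L = Qs @ R # Rs" "\<forall>x\<in>fv_item (Fm A). x \<notin> doms Qs \<longrightarrow> x \<notin> Domain R"
    then have "fa Id (Qs @ Rs) A B" using fa_str_aux[OF ifm] by simp
    then show "ia (Qs @ Rs) (Fm A) (Fm B)" by (rule ia.ifm)
  qed
next
  case (ibrk f V W L \<Gamma> \<Delta>)
  show ?case
  proof (intro allI impI)
    fix Qs assume L: "L = Qs @ R # Rs" and h: "\<forall>x\<in>fv_item (Brk V \<Gamma>). x \<notin> doms Qs \<longrightarrow> x \<notin> Domain R"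
    let ?l = "(\<lambda>x. (x, f x)) ` fset V"
    have "rel_mset (ia (?l # Qs @ Rs)) \<Gamma> \<Delta>"
    proof (rule rel_mset_mono'[OF ibrk(2)])
      fix a b assume a: "a \<in># \<Gamma>" and ab: "ia (?l # L) a b \<and>
        (\<forall>Qs. ?l # L = Qs @ R # Rs \<longrightarrow> (\<forall>x\<in>fv_item a. x \<notin> doms Qs \<longrightarrow> x \<notin> Domain R) \<longrightarrow> ia (Qs @ Rs) a b)"
      have "?l # L = (?l # Qs) @ R # Rs" using L by simp
      moreover have "\<forall>x\<in>fv_item a. x \<notin> doms (?l # Qs) \<longrightarrow> x \<notin> Domain R"
      proof (intro ballI impI)
        fix x assume "x \<in> fv_item a" "x \<notin> doms (?l # Qs)"
        moreover then have "x \<in> fv_item (Brk V \<Gamma>)" "x \<notin> doms Qs" using a by auto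
        ultimately show "x \<notin> Domain R" using h by blast
      qed
      ultimately have "ia ((?l # Qs) @ Rs) a b" using ab by blast
      then show "ia (?l # Qs @ Rs) a b" by simp
    qed
    then show "ia (Qs @ Rs) (Brk V \<Gamma>) (Brk W \<Delta>)" using ibrk(1) by (rule ia.ibrk[rotated])
  qed
qed

lemma ia_str: "ia (R # Rs) I J \<Longrightarrow> fv_item I \<inter> Domain R = {} \<Longrightarrow> ia Rs I J"
  using ia_str_aux[of "R # Rs" I J R Rs] by fastforce



primrec brk :: "item \<Rightarrow> var set" where
  "brk (Fm A) = {}"
| "brk (Brk V \<Gamma>) = fset V \<union> \<Union> (set_mset (image_mset brk \<Gamma>))"

lemma in_sum_image: "x \<in># sum_mset (image_mset g M) \<longleftrightarrow> (\<exists>a\<in>#M. x \<in># g a)"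
  by (induction M) auto

lemma bv_Brk: "bv_item (Brk V \<Gamma>) = mset_set (fset V) + bv_ctx \<Gamma>"
  by (simp add: bv_ctx_def)

lemma bv_ctx_add[simp]: "bv_ctx (add_mset I \<Gamma>) = bv_item I + bv_ctx \<Gamma>"
  by (simp add: bv_ctx_def)
lemma fv_ctx_add[simp]: "fv_ctx (add_mset I \<Gamma>) = fv_item I \<union> fv_ctx \<Gamma>"
  by (simp add: fv_ctx_def)
lemma flat_ctx_add[simp]: "flat_ctx (add_mset I \<Gamma>) = flat_item I + flat_ctx \<Gamma>"
  by (simp add: flat_ctx_def)
lemma ctx_empty[simp]: "bv_ctx {#} = {#}" "fv_ctx {#} = {}" "flat_ctx {#} = {#}"
  by (simp_all add: bv_ctx_def fv_ctx_def flat_ctx_def)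

lemma brk_bv: "brk I \<subseteq> set_mset (bv_item I)"
proof (induction I)
  case (Fm A) then show ?case by simp
next
  case (Brk V \<Gamma>)
  show ?case
  proof
    fix x assume "x \<in> brk (Brk V \<Gamma>)"
    then have "x \<in> fset V \<or> (\<exists>a\<in>#\<Gamma>. x \<in> brk a)" by auto
    then show "x \<in> set_mset (bv_item (Brk V \<Gamma>))"
    proof
      assume "x \<in> fset V" then show ?thesis by simp
    next
      assume "\<exists>a\<in>#\<Gamma>. x \<in> brk a"
      then obtain a where "a \<in># \<Gamma>" "x \<in> brk a" by blast
      then have "x \<in># bv_item a" using Brk.IH by blast
      then have "x \<in># sum_mset (image_mset bv_item \<Gamma>)" unfolding in_sum_image using \<open>a \<in># \<Gamma>\<close> by blast
      then show ?thesis by simp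
    qed
  qed
qed

lemma flat_fv: "A \<in># flat_item I \<Longrightarrow> fv_fm A \<subseteq> fv_item I \<union> brk I"
proof (induction I)
  case (Fm B) then show ?case by simp
next
  case (Brk V \<Gamma>)
  then obtain a where a: "a \<in># \<Gamma>" "A \<in># flat_item a" using in_sum_image[of A flat_item \<Gamma>] by auto
  then have "fv_fm A \<subseteq> fv_item a \<union> brk a" using Brk.IH by blast
  moreover have "fv_item a - fset V \<subseteq> fv_item (Brk V \<Gamma>)" using a(1) by auto
  moreover have "brk a \<subseteq> brk (Brk V \<Gamma>)" using a(1) by auto
  ultimately show ?case by auto
qed

lemma count_le1_disj: "\<forall>x. count (M + N) x \<le> 1 \<Longrightarrow> set_mset M \<inter> set_mset N = {}"
proof (rule ccontr)
  assume h: "\<forall>x. count (M + N) x \<le> 1" and "set_mset M \<inter> set_mset N \<noteq> {}"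
  then obtain x where "x \<in># M" "x \<in># N" by blast
  then have "count M x \<ge> 1" "count N x \<ge> 1" by (simp_all add: Suc_le_eq)
  moreover have "count (M + N) x = count M x + count N x" by simp
  ultimately have "count (M + N) x \<ge> 2" by linarith
  moreover have "count (M + N) x \<le> 1" using h by blast
  ultimately show False by linarith
qed

lemma count_sub: "A \<subseteq># B \<Longrightarrow> \<forall>x. count B x \<le> (1::nat) \<Longrightarrow> \<forall>x. count A x \<le> 1"
  by (meson le_trans mset_subset_eq_count)

lemma bv_sub_member: "J \<in># \<Gamma> \<Longrightarrow> bv_item J \<subseteq># bv_ctx \<Gamma>"
proof -
  assume "J \<in># \<Gamma>"
  then obtain \<Gamma>' where "\<Gamma> = add_mset J \<Gamma>'" by (metis multi_member_split)
  then show ?thesis by simp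
qed

lemma bv_two: "J \<in># \<Gamma> \<Longrightarrow> bv_item I + bv_item J \<subseteq># bv_ctx (add_mset I \<Gamma>)"
  using bv_sub_member by (simp add: subset_mset.add_left_mono)

inductive ias :: "(var \<Rightarrow> var) \<Rightarrow> (var \<times> var) set list \<Rightarrow> item \<Rightarrow> item \<Rightarrow> bool" for \<sigma> where
  sfm: "fa Id Rs A B \<Longrightarrow> ias \<sigma> Rs (Fm A) (Fm B)"
| sbrk: "bij_betw \<sigma> (fset V) (fset W) \<Longrightarrow> rel_mset (ias \<sigma> ((\<lambda>x. (x, \<sigma> x)) ` fset V # Rs)) \<Gamma> \<Delta>
    \<Longrightarrow> ias \<sigma> Rs (Brk V \<Gamma>) (Brk W \<Delta>)"

lemma ias_cong_aux: "ias \<sigma> Rs I J \<Longrightarrow> (\<forall>x\<in>brk I. \<sigma>' x = \<sigma> x) \<longrightarrow> ias \<sigma>' Rs I J"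
proof (induction rule: ias.induct)
  case (sfm Rs A B) then show ?case by (auto intro: ias.sfm)
next
  case (sbrk V W Rs \<Gamma> \<Delta>)
  show ?case
  proof
    assume h: "\<forall>x\<in>brk (Brk V \<Gamma>). \<sigma>' x = \<sigma> x"
    have eqV: "\<forall>x\<in>fset V. \<sigma>' x = \<sigma> x" using h by simp
    have b: "bij_betw \<sigma>' (fset V) (fset W)" using sbrk(1) eqV by (metis bij_betw_cong)
    have l: "(\<lambda>x. (x, \<sigma>' x)) ` fset V = (\<lambda>x. (x, \<sigma> x)) ` fset V" using eqV by auto
    have "rel_mset (ias \<sigma>' ((\<lambda>x. (x, \<sigma> x)) ` fset V # Rs)) \<Gamma> \<Delta>"
    proof (rule rel_mset_mono'[OF sbrk(2)])
      fix a b assume a: "a \<in># \<Gamma>" and ab: "ias \<sigma> ((\<lambda>x. (x, \<sigma> x)) ` fset V # Rs) a b \<and>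
          ((\<forall>x\<in>brk a. \<sigma>' x = \<sigma> x) \<longrightarrow> ias \<sigma>' ((\<lambda>x. (x, \<sigma> x)) ` fset V # Rs) a b)"
      have "\<forall>x\<in>brk a. \<sigma>' x = \<sigma> x" using h a by auto
      then show "ias \<sigma>' ((\<lambda>x. (x, \<sigma> x)) ` fset V # Rs) a b" using ab by blast
    qed
    then have "rel_mset (ias \<sigma>' ((\<lambda>x. (x, \<sigma>' x)) ` fset V # Rs)) \<Gamma> \<Delta>" using l by simp
    then show "ias \<sigma>' Rs (Brk V \<Gamma>) (Brk W \<Delta>)" using b by (rule ias.sbrk[rotated])
  qed
qed

lemma ias_cong: "ias \<sigma> Rs I J \<Longrightarrow> (\<forall>x\<in>brk I. \<sigma>' x = \<sigma> x) \<Longrightarrow> ias \<sigma>' Rs I J"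
  using ias_cong_aux by blast

lemma glue_ms:
  assumes "rel_mset (\<lambda>a b. \<exists>\<sigma>. P \<sigma> a b \<and> (\<forall>x. x \<notin> brk a \<longrightarrow> \<sigma> x = x)) \<Gamma> \<Delta>"
    and cong: "\<And>\<sigma> \<sigma>' a b. P \<sigma> a b \<Longrightarrow> \<forall>x\<in>brk a. \<sigma>' x = \<sigma> x \<Longrightarrow> P \<sigma>' a b"
    and "\<forall>x. count (bv_ctx \<Gamma>) x \<le> 1"
  shows "\<exists>\<sigma>. rel_mset (P \<sigma>) \<Gamma> \<Delta> \<and> (\<forall>x. x \<notin> (\<Union>a\<in>set_mset \<Gamma>. brk a) \<longrightarrow> \<sigma> x = x)"
  using assms(1,3)
proof (induction \<Gamma> arbitrary: \<Delta>)
  case empty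
  then have "\<Delta> = {#}" by simp
  moreover have "rel_mset (P id) {#} {#}" by (rule rel_mset_Zero)
  ultimately show ?case by auto
next
  case (add a M)
  obtain N b where Nb: "\<Delta> = add_mset b N" "\<exists>\<sigma>. P \<sigma> a b \<and> (\<forall>x. x \<notin> brk a \<longrightarrow> \<sigma> x = x)"
    "rel_mset (\<lambda>a b. \<exists>\<sigma>. P \<sigma> a b \<and> (\<forall>x. x \<notin> brk a \<longrightarrow> \<sigma> x = x)) M N"
    using msed_rel_invL[OF add.prems(1)] by blast
  have cM: "\<forall>x. count (bv_ctx M) x \<le> 1"
    using count_sub[OF _ add.prems(2)] by simp
  obtain \<sigma>M where sM: "rel_mset (P \<sigma>M) M N" "\<forall>x. x \<notin> (\<Union>a\<in>set_mset M. brk a) \<longrightarrow> \<sigma>M x = x"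
    using add.IH[OF Nb(3) cM] by blast
  obtain \<sigma>a where sa: "P \<sigma>a a b" "\<forall>x. x \<notin> brk a \<longrightarrow> \<sigma>a x = x" using Nb(2) by blast
  define \<sigma> where "\<sigma> = (\<lambda>x. if x \<in> brk a then \<sigma>a x else \<sigma>M x)"
  have disj: "brk c \<inter> brk a = {}" if c: "c \<in># M" for c
  proof -
    have "bv_item a + bv_item c \<subseteq># bv_ctx (add_mset a M)" using bv_two[OF c] .
    then have "\<forall>x. count (bv_item a + bv_item c) x \<le> 1" using count_sub add.prems(2) by blast
    then have "set_mset (bv_item a) \<inter> set_mset (bv_item c) = {}" by (rule count_le1_disj)
    then show ?thesis using brk_bv[of a] brk_bv[of c] by blast
  qed
  have "P \<sigma> a b" using cong[OF sa(1)] by (simp add: \<sigma>_def)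
  moreover have "rel_mset (P \<sigma>) M N"
  proof (rule rel_mset_mono'[OF sM(1)])
    fix c d assume "c \<in># M" "P \<sigma>M c d"
    moreover have "\<forall>x\<in>brk c. \<sigma> x = \<sigma>M x" using disj[OF \<open>c \<in># M\<close>] by (auto simp: \<sigma>_def)
    ultimately show "P \<sigma> c d" using cong by blast
  qed
  ultimately have "rel_mset (P \<sigma>) (add_mset a M) \<Delta>" unfolding Nb(1) by (rule rel_mset_Plus)
  moreover have "\<forall>x. x \<notin> (\<Union>a\<in>set_mset (add_mset a M). brk a) \<longrightarrow> \<sigma> x = x"
    using sM(2) by (auto simp: \<sigma>_def)
  ultimately show ?case by blast
qed

lemma glue_aux: "ia Rs I J \<Longrightarrow> (\<forall>x. count (bv_item I) x \<le> 1) \<longrightarrow> (\<exists>\<sigma>. ias \<sigma> Rs I J \<and> (\<forall>x. x \<notin> brk I \<longrightarrow> \<sigma> x = x))"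
proof (induction rule: ia.induct)
  case (ifm Rs A B)
  then show ?case by (auto intro: ias.sfm)
next
  case (ibrk f V W Rs \<Gamma> \<Delta>)
  let ?L = "(\<lambda>x. (x, f x)) ` fset V # Rs"
  show ?case
  proof
    assume c: "\<forall>x. count (bv_item (Brk V \<Gamma>)) x \<le> 1"
    have eqb: "bv_item (Brk V \<Gamma>) = mset_set (fset V) + bv_ctx \<Gamma>" by (rule bv_Brk)
    have c2: "\<forall>x. count (mset_set (fset V) + bv_ctx \<Gamma>) x \<le> 1" using c[unfolded eqb] .
    then have cG: "\<forall>x. count (bv_ctx \<Gamma>) x \<le> 1" by (metis count_sub mset_subset_eq_add_right)
    have dV: "fset V \<inter> set_mset (bv_ctx \<Gamma>) = {}" using count_le1_disj[OF c2] by simp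
    have "rel_mset (\<lambda>a b. \<exists>\<sigma>. ias \<sigma> ?L a b \<and> (\<forall>x. x \<notin> brk a \<longrightarrow> \<sigma> x = x)) \<Gamma> \<Delta>"
    proof (rule rel_mset_mono'[OF ibrk(2)])
      fix a b assume a: "a \<in># \<Gamma>" and ab: "ia ?L a b \<and>
        ((\<forall>x. count (bv_item a) x \<le> 1) \<longrightarrow> (\<exists>\<sigma>. ias \<sigma> ?L a b \<and> (\<forall>x. x \<notin> brk a \<longrightarrow> \<sigma> x = x)))"
      have "\<forall>x. count (bv_item a) x \<le> 1" using count_sub[OF bv_sub_member[OF a] cG] .
      then show "\<exists>\<sigma>. ias \<sigma> ?L a b \<and> (\<forall>x. x \<notin> brk a \<longrightarrow> \<sigma> x = x)" using ab by blast
    qed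
    then have "\<exists>\<sigma>. rel_mset (ias \<sigma> ?L) \<Gamma> \<Delta> \<and> (\<forall>x. x \<notin> (\<Union>a\<in>set_mset \<Gamma>. brk a) \<longrightarrow> \<sigma> x = x)"
      by (rule glue_ms[where P="\<lambda>\<sigma>. ias \<sigma> ?L", OF _ _ cG]) (auto intro: ias_cong)
    then obtain \<sigma>0 where s0: "rel_mset (ias \<sigma>0 ?L) \<Gamma> \<Delta>" "\<forall>x. x \<notin> (\<Union>a\<in>set_mset \<Gamma>. brk a) \<longrightarrow> \<sigma>0 x = x"
      by blast
    define \<sigma> where "\<sigma> = (\<lambda>x. if x \<in> fset V then f x else \<sigma>0 x)"
    have dB: "brk a \<inter> fset V = {}" if a: "a \<in># \<Gamma>" for a
      using brk_bv[of a] bv_sub_member[OF a] dV by (auto dest: mset_subset_eqD)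
    have l: "(\<lambda>x. (x, \<sigma> x)) ` fset V = (\<lambda>x. (x, f x)) ` fset V" by (auto simp: \<sigma>_def)
    have "rel_mset (ias \<sigma> ?L) \<Gamma> \<Delta>"
    proof (rule rel_mset_mono'[OF s0(1)])
      fix a b assume a: "a \<in># \<Gamma>" and "ias \<sigma>0 ?L a b"
      moreover have "\<forall>x\<in>brk a. \<sigma> x = \<sigma>0 x" using dB[OF a] by (auto simp: \<sigma>_def)
      ultimately show "ias \<sigma> ?L a b" using ias_cong by blast
    qed
    then have r: "rel_mset (ias \<sigma> ((\<lambda>x. (x, \<sigma> x)) ` fset V # Rs)) \<Gamma> \<Delta>" using l by simp
    have b: "bij_betw \<sigma> (fset V) (fset W)" using ibrk(1) by (rule bij_betw_cong[THEN iffD1, rotated]) (simp add: \<sigma>_def)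
    have "ias \<sigma> Rs (Brk V \<Gamma>) (Brk W \<Delta>)" using b r by (rule ias.sbrk)
    moreover have "\<forall>x. x \<notin> brk (Brk V \<Gamma>) \<longrightarrow> \<sigma> x = x" using s0(2) by (auto simp: \<sigma>_def)
    ultimately show "\<exists>\<sigma>. ias \<sigma> Rs (Brk V \<Gamma>) (Brk W \<Delta>) \<and> (\<forall>x. x \<notin> brk (Brk V \<Gamma>) \<longrightarrow> \<sigma> x = x)" by blast
  qed
qed

lemma glue_ctx:
  assumes "rel_mset (ia Rs) \<Gamma> \<Delta>" "\<forall>x. count (bv_ctx \<Gamma>) x \<le> 1"
  shows "\<exists>\<sigma>. rel_mset (ias \<sigma> Rs) \<Gamma> \<Delta> \<and> (\<forall>x. x \<notin> set_mset (bv_ctx \<Gamma>) \<longrightarrow> \<sigma> x = x)"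
proof -
  have "rel_mset (\<lambda>a b. \<exists>\<sigma>. ias \<sigma> Rs a b \<and> (\<forall>x. x \<notin> brk a \<longrightarrow> \<sigma> x = x)) \<Gamma> \<Delta>"
  proof (rule rel_mset_mono'[OF assms(1)])
    fix a b assume a: "a \<in># \<Gamma>" "ia Rs a b"
    have "\<forall>x. count (bv_item a) x \<le> 1" using count_sub[OF bv_sub_member[OF a(1)] assms(2)] .
    then show "\<exists>\<sigma>. ias \<sigma> Rs a b \<and> (\<forall>x. x \<notin> brk a \<longrightarrow> \<sigma> x = x)" using glue_aux[OF a(2)] by blast
  qed
  then have "\<exists>\<sigma>. rel_mset (ias \<sigma> Rs) \<Gamma> \<Delta> \<and> (\<forall>x. x \<notin> (\<Union>a\<in>set_mset \<Gamma>. brk a) \<longrightarrow> \<sigma> x = x)"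
    by (rule glue_ms[where P="\<lambda>\<sigma>. ias \<sigma> Rs", OF _ _ assms(2)]) (auto intro: ias_cong)
  then obtain \<sigma> where s: "rel_mset (ias \<sigma> Rs) \<Gamma> \<Delta>" "\<forall>x. x \<notin> (\<Union>a\<in>set_mset \<Gamma>. brk a) \<longrightarrow> \<sigma> x = x"
    by blast
  have "(\<Union>a\<in>set_mset \<Gamma>. brk a) \<subseteq> set_mset (bv_ctx \<Gamma>)"
    using brk_bv bv_sub_member by (fastforce dest: mset_subset_eqD)
  then show ?thesis using s by blast
qed

lemma veq_collapse0: "veq Id Rs x y \<Longrightarrow> \<forall>R\<in>set Rs. R \<subseteq> gr \<sigma> \<Longrightarrow> (x \<notin> doms Rs \<Longrightarrow> \<sigma> x = x) \<Longrightarrow> y = \<sigma> x"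
proof (induction Rs)
  case Nil then show ?case by simp
next
  case (Cons R Rs)
  show ?case
  proof (cases "x \<in> Domain R \<or> y \<in> Range R")
    case True
    then have "(x, y) \<in> R" using Cons.prems(1) by simp
    then have "(x, y) \<in> gr \<sigma>" using Cons.prems(2) by auto
    then show ?thesis by simp
  next
    case False
    then have "veq Id Rs x y" using Cons.prems(1) by simp
    moreover have "\<forall>R\<in>set Rs. R \<subseteq> gr \<sigma>" using Cons.prems(2) by simp
    moreover have "x \<notin> doms Rs \<Longrightarrow> \<sigma> x = x" using Cons.prems(3) False by simp
    ultimately show ?thesis by (rule Cons.IH)
  qed
qed

lemma veq_collapse: "veq Id (Qs @ Rs) x y \<Longrightarrow> \<forall>R\<in>set Rs. R \<subseteq> gr \<sigma> \<Longrightarrow> (x \<notin> doms Qs \<Longrightarrow> x \<notin> doms Rs \<Longrightarrow> \<sigma> x = x)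
  \<Longrightarrow> veq (gr \<sigma>) Qs x y"
proof (induction Qs)
  case Nil
  then have "y = \<sigma> x" using veq_collapse0 by simp
  then show ?case by simp
next
  case (Cons Q Qs)
  show ?case
  proof (cases "x \<in> Domain Q \<or> y \<in> Range Q")
    case True then show ?thesis using Cons.prems(1) by simp
  next
    case False
    then have "veq Id (Qs @ Rs) x y" using Cons.prems(1) by simp
    moreover have "x \<notin> doms Qs \<Longrightarrow> x \<notin> doms Rs \<Longrightarrow> \<sigma> x = x" using Cons.prems(3) False by simp
    ultimately have "veq (gr \<sigma>) Qs x y" using Cons.IH Cons.prems(2) by blast
    then show ?thesis using False by simp
  qed
qed

lemma fa_collapse_aux:
  "fa Id L A B \<Longrightarrow> \<forall>Qs. L = Qs @ Rs \<longrightarrow> (\<forall>R\<in>set Rs. R \<subseteq> gr \<sigma>) \<longrightarrow>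
     (\<forall>x\<in>fv_fm A. x \<notin> doms Qs \<longrightarrow> x \<notin> doms Rs \<longrightarrow> \<sigma> x = x) \<longrightarrow> fa (gr \<sigma>) Qs A B"
proof (induction rule: fa.induct)
  case (fpred L ts ss p)
  show ?case
  proof (intro allI impI)
    fix Qs assume L: "L = Qs @ Rs" and R: "\<forall>R\<in>set Rs. R \<subseteq> gr \<sigma>"
      and h: "\<forall>x\<in>fv_fm (Pred p ts). x \<notin> doms Qs \<longrightarrow> x \<notin> doms Rs \<longrightarrow> \<sigma> x = x"
    have "list_all2 (trel (veq (gr \<sigma>) Qs)) ts ss"
      unfolding list_all2_conv_all_nth
    proof (intro conjI allI impI)
      show "length ts = length ss" using fpred by (rule list_all2_lengthD)
      fix i assume i: "i < length ts"
      have tr: "trel (veq Id L) (ts ! i) (ss ! i)" using list_all2_nthD[OF fpred i] .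
      show "trel (veq (gr \<sigma>) Qs) (ts ! i) (ss ! i)"
      proof (rule trel_mono[OF tr])
        fix v w assume v: "v \<in> fv_trm (ts ! i)" and vw: "veq Id L v w"
        have "v \<in> fv_fm (Pred p ts)" using v nth_mem[OF i] by auto
        then have "v \<notin> doms Qs \<Longrightarrow> v \<notin> doms Rs \<Longrightarrow> \<sigma> v = v" using h by blast
        then show "veq (gr \<sigma>) Qs v w" using veq_collapse vw L R by blast
      qed
    qed
    then show "fa (gr \<sigma>) Qs (Pred p ts) (Pred p ss)" by (rule fa.fpred)
  qed
next
  case (fimp L A C B D)
  show ?case
  proof (intro allI impI)
    fix Qs assume L: "L = Qs @ Rs" and R: "\<forall>R\<in>set Rs. R \<subseteq> gr \<sigma>"
      and h: "\<forall>x\<in>fv_fm (Imp A B). x \<notin> doms Qs \<longrightarrow> x \<notin> doms Rs \<longrightarrow> \<sigma> x = x"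
    then have "fa (gr \<sigma>) Qs A C" "fa (gr \<sigma>) Qs B D" using fimp.IH by simp_all
    then show "fa (gr \<sigma>) Qs (Imp A B) (Imp C D)" by (rule fa.fimp)
  qed
next
  case (fall x y L A B)
  show ?case
  proof (intro allI impI)
    fix Qs assume L: "L = Qs @ Rs" and R: "\<forall>R\<in>set Rs. R \<subseteq> gr \<sigma>"
      and h: "\<forall>v\<in>fv_fm (All x A). v \<notin> doms Qs \<longrightarrow> v \<notin> doms Rs \<longrightarrow> \<sigma> v = v"
    have "{(x, y)} # L = ({(x, y)} # Qs) @ Rs" using L by simp
    moreover have "\<forall>v\<in>fv_fm A. v \<notin> doms ({(x, y)} # Qs) \<longrightarrow> v \<notin> doms Rs \<longrightarrow> \<sigma> v = v"
    proof (intro ballI impI)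
      fix v assume "v \<in> fv_fm A" "v \<notin> doms ({(x, y)} # Qs)" "v \<notin> doms Rs"
      moreover then have "v \<in> fv_fm (All x A)" "v \<notin> doms Qs" by auto
      ultimately show "\<sigma> v = v" using h by blast
    qed
    ultimately have "fa (gr \<sigma>) ({(x, y)} # Qs) A B" using fall.IH R by blast
    then show "fa (gr \<sigma>) Qs (All x A) (All y B)" by (rule fa.fall)
  qed
qed

lemma C_item_aux: "ias \<sigma> Rs I J \<Longrightarrow> (\<forall>R\<in>set Rs. R \<subseteq> gr \<sigma>) \<longrightarrow> (\<forall>x\<in>fv_item I. x \<notin> doms Rs \<longrightarrow> \<sigma> x = x)
  \<longrightarrow> (\<forall>A. A \<in># flat_item I \<longrightarrow> (\<exists>B\<in>#flat_item J. fa (gr \<sigma>) [] A B))"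
proof (induction rule: ias.induct)
  case (sfm Rs A B)
  show ?case
  proof (intro impI allI)
    assume R: "\<forall>R\<in>set Rs. R \<subseteq> gr \<sigma>" and h: "\<forall>x\<in>fv_item (Fm A). x \<notin> doms Rs \<longrightarrow> \<sigma> x = x"
    fix A' assume "A' \<in># flat_item (Fm A)"
    then have A': "A' = A" by simp
    have "fa (gr \<sigma>) [] A B" using fa_collapse_aux[OF sfm, of Rs \<sigma>] R h by simp
    then show "\<exists>B'\<in>#flat_item (Fm B). fa (gr \<sigma>) [] A' B'" using A' by simp
  qed
next
  case (sbrk V W Rs \<Gamma> \<Delta>)
  let ?L = "(\<lambda>x. (x, \<sigma> x)) ` fset V # Rs"
  show ?case
  proof (intro impI allI)
    assume R: "\<forall>R\<in>set Rs. R \<subseteq> gr \<sigma>" and h: "\<forall>x\<in>fv_item (Brk V \<Gamma>). x \<notin> doms Rs \<longrightarrow> \<sigma> x = x"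
    fix A assume "A \<in># flat_item (Brk V \<Gamma>)"
    then obtain a where a: "a \<in># \<Gamma>" "A \<in># flat_item a" using in_sum_image[of A flat_item \<Gamma>] by auto
    obtain b where b: "b \<in># \<Delta>" "ias \<sigma> ?L a b \<and> ((\<forall>R\<in>set ?L. R \<subseteq> gr \<sigma>) \<longrightarrow> (\<forall>x\<in>fv_item a. x \<notin> doms ?L \<longrightarrow> \<sigma> x = x)
        \<longrightarrow> (\<forall>A. A \<in># flat_item a \<longrightarrow> (\<exists>B\<in>#flat_item b. fa (gr \<sigma>) [] A B)))"
      using rel_mset_ex[OF sbrk(2) a(1)] by blast
    have "\<forall>R\<in>set ?L. R \<subseteq> gr \<sigma>" using R by auto
    moreover have "\<forall>x\<in>fv_item a. x \<notin> doms ?L \<longrightarrow> \<sigma> x = x"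
    proof (intro ballI impI)
      fix x assume "x \<in> fv_item a" "x \<notin> doms ?L"
      moreover then have "x \<in> fv_item (Brk V \<Gamma>)" "x \<notin> doms Rs" using a(1) by auto
      ultimately show "\<sigma> x = x" using h by blast
    qed
    ultimately obtain B where "B \<in># flat_item b" "fa (gr \<sigma>) [] A B" using b(2) a(2) by blast
    moreover have "B \<in># flat_item (Brk W \<Delta>)" using b(1) \<open>B \<in># flat_item b\<close> in_sum_image[of B flat_item \<Delta>] by auto
    ultimately show "\<exists>B\<in>#flat_item (Brk W \<Delta>). fa (gr \<sigma>) [] A B" by blast
  qed
qed

lemma C_item: "ias \<sigma> Rs I J \<Longrightarrow> \<forall>R\<in>set Rs. R \<subseteq> gr \<sigma> \<Longrightarrow> \<forall>x\<in>fv_item I. x \<notin> doms Rs \<longrightarrow> \<sigma> x = x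
  \<Longrightarrow> A \<in># flat_item I \<Longrightarrow> \<exists>B\<in>#flat_item J. fa (gr \<sigma>) [] A B"
  using C_item_aux by blast



inductive cleanA :: "(var \<times> var) set list \<Rightarrow> ljb_ctx \<Rightarrow> ljb_ctx \<Rightarrow> bool" where
  cpush: "cleanA Rs (add_mset (Brk V (add_mset I \<Gamma>)) \<Xi>) (add_mset I (add_mset (Brk V \<Gamma>) \<Xi>))"
| cempty: "cleanA Rs (add_mset (Brk V {#}) \<Xi>) \<Xi>"
| cdup: "ia Rs I I1 \<Longrightarrow> ia Rs I I2 \<Longrightarrow> cleanA Rs (add_mset I1 (add_mset I2 \<Xi>)) (add_mset I1 \<Xi>)"
| cins: "cleanA ((\<lambda>x. (x, f x)) ` fset V # Rs) \<Gamma> \<Gamma>' \<Longrightarrow> bij_betw f (fset V) (fset W)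
    \<Longrightarrow> cleanA Rs (add_mset (Brk W \<Gamma>) \<Xi>) (add_mset (Brk W \<Gamma>') \<Xi>)"

lemma transfer:
  "clean1 \<Gamma> \<Gamma>' \<Longrightarrow> \<forall>Rs \<Gamma>0. rel_mset (ia Rs) \<Gamma> \<Gamma>0 \<longrightarrow> (\<exists>\<Gamma>1. cleanA Rs \<Gamma>0 \<Gamma>1 \<and> rel_mset (ia Rs) \<Gamma>' \<Gamma>1)"
proof (induction rule: clean1.induct)
  case (push_out I V \<Gamma> \<Xi>)
  show ?case
  proof (intro allI impI)
    fix Rs \<Gamma>0 assume r: "rel_mset (ia Rs) (add_mset (Brk V (add_mset I \<Gamma>)) \<Xi>) \<Gamma>0"
    obtain \<Xi>0 b where b: "\<Gamma>0 = add_mset b \<Xi>0" "ia Rs (Brk V (add_mset I \<Gamma>)) b" "rel_mset (ia Rs) \<Xi> \<Xi>0"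
      using msed_rel_invL[OF r] by blast
    obtain f W \<Delta> where W: "b = Brk W \<Delta>" "bij_betw f (fset V) (fset W)"
      "rel_mset (ia ((\<lambda>x. (x, f x)) ` fset V # Rs)) (add_mset I \<Gamma>) \<Delta>"
      using b(2) by (auto elim: ia_BrkE)
    obtain \<Delta>0 I0 where D: "\<Delta> = add_mset I0 \<Delta>0" "ia ((\<lambda>x. (x, f x)) ` fset V # Rs) I I0"
      "rel_mset (ia ((\<lambda>x. (x, f x)) ` fset V # Rs)) \<Gamma> \<Delta>0"
      using msed_rel_invL[OF W(3)] by blast
    have "Domain ((\<lambda>x. (x, f x)) ` fset V) = fset V" by auto
    then have "fv_item I \<inter> Domain ((\<lambda>x. (x, f x)) ` fset V) = {}" using push_out by simp
    then have II0: "ia Rs I I0" using ia_str[OF D(2)] by blast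
    have "cleanA Rs \<Gamma>0 (add_mset I0 (add_mset (Brk W \<Delta>0) \<Xi>0))"
      unfolding b(1) W(1) D(1) by (rule cleanA.cpush)
    moreover have "ia Rs (Brk V \<Gamma>) (Brk W \<Delta>0)" using W(2) D(3) by (rule ia.ibrk)
    then have "rel_mset (ia Rs) (add_mset (Brk V \<Gamma>) \<Xi>) (add_mset (Brk W \<Delta>0) \<Xi>0)"
      using b(3) by (rule rel_mset_Plus)
    then have "rel_mset (ia Rs) (add_mset I (add_mset (Brk V \<Gamma>) \<Xi>)) (add_mset I0 (add_mset (Brk W \<Delta>0) \<Xi>0))"
      by (rule rel_mset_Plus[where R="ia Rs", OF II0])
    ultimately show "\<exists>\<Gamma>1. cleanA Rs \<Gamma>0 \<Gamma>1 \<and> rel_mset (ia Rs) (add_mset I (add_mset (Brk V \<Gamma>) \<Xi>)) \<Gamma>1"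
      by blast
  qed
next
  case (empty_brk V \<Xi>)
  show ?case
  proof (intro allI impI)
    fix Rs \<Gamma>0 assume r: "rel_mset (ia Rs) (add_mset (Brk V {#}) \<Xi>) \<Gamma>0"
    obtain \<Xi>0 b where b: "\<Gamma>0 = add_mset b \<Xi>0" "ia Rs (Brk V {#}) b" "rel_mset (ia Rs) \<Xi> \<Xi>0"
      using msed_rel_invL[OF r] by blast
    obtain f W \<Delta> where W: "b = Brk W \<Delta>" "rel_mset (ia ((\<lambda>x. (x, f x)) ` fset V # Rs)) {#} \<Delta>"
      using b(2) by (auto elim: ia_BrkE)
    have "\<Delta> = {#}" using W(2) by simp
    then have "cleanA Rs \<Gamma>0 \<Xi>0" unfolding b(1) W(1) by (simp add: cleanA.cempty)
    then show "\<exists>\<Gamma>1. cleanA Rs \<Gamma>0 \<Gamma>1 \<and> rel_mset (ia Rs) \<Xi> \<Gamma>1" using b(3) by blast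
  qed
next
  case (dup I \<Xi>)
  show ?case
  proof (intro allI impI)
    fix Rs \<Gamma>0 assume r: "rel_mset (ia Rs) (add_mset I (add_mset I \<Xi>)) \<Gamma>0"
    obtain \<Gamma>a I1 where a: "\<Gamma>0 = add_mset I1 \<Gamma>a" "ia Rs I I1" "rel_mset (ia Rs) (add_mset I \<Xi>) \<Gamma>a"
      using msed_rel_invL[OF r] by blast
    obtain \<Xi>0 I2 where c: "\<Gamma>a = add_mset I2 \<Xi>0" "ia Rs I I2" "rel_mset (ia Rs) \<Xi> \<Xi>0"
      using msed_rel_invL[OF a(3)] by blast
    have "cleanA Rs \<Gamma>0 (add_mset I1 \<Xi>0)" unfolding a(1) c(1) by (rule cleanA.cdup[OF a(2) c(2)])
    moreover have "rel_mset (ia Rs) (add_mset I \<Xi>) (add_mset I1 \<Xi>0)" using a(2) c(3) by (rule rel_mset_Plus)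
    ultimately show "\<exists>\<Gamma>1. cleanA Rs \<Gamma>0 \<Gamma>1 \<and> rel_mset (ia Rs) (add_mset I \<Xi>) \<Gamma>1" by blast
  qed
next
  case (inside \<Gamma> \<Gamma>' V \<Xi>)
  show ?case
  proof (intro allI impI)
    fix Rs \<Gamma>0 assume r: "rel_mset (ia Rs) (add_mset (Brk V \<Gamma>) \<Xi>) \<Gamma>0"
    obtain \<Xi>0 b where b: "\<Gamma>0 = add_mset b \<Xi>0" "ia Rs (Brk V \<Gamma>) b" "rel_mset (ia Rs) \<Xi> \<Xi>0"
      using msed_rel_invL[OF r] by blast
    obtain f W \<Delta> where W: "b = Brk W \<Delta>" "bij_betw f (fset V) (fset W)"
      "rel_mset (ia ((\<lambda>x. (x, f x)) ` fset V # Rs)) \<Gamma> \<Delta>"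
      using b(2) by (auto elim: ia_BrkE)
    obtain \<Delta>1 where D: "cleanA ((\<lambda>x. (x, f x)) ` fset V # Rs) \<Delta> \<Delta>1"
      "rel_mset (ia ((\<lambda>x. (x, f x)) ` fset V # Rs)) \<Gamma>' \<Delta>1"
      using inside.IH W(3) by blast
    have "cleanA Rs \<Gamma>0 (add_mset (Brk W \<Delta>1) \<Xi>0)" unfolding b(1) W(1) by (rule cleanA.cins[OF D(1) W(2)])
    moreover have "ia Rs (Brk V \<Gamma>') (Brk W \<Delta>1)" using W(2) D(2) by (rule ia.ibrk)
    then have "rel_mset (ia Rs) (add_mset (Brk V \<Gamma>') \<Xi>) (add_mset (Brk W \<Delta>1) \<Xi>0)" using b(3) by (rule rel_mset_Plus)
    ultimately show "\<exists>\<Gamma>1. cleanA Rs \<Gamma>0 \<Gamma>1 \<and> rel_mset (ia Rs) (add_mset (Brk V \<Gamma>') \<Xi>) \<Gamma>1" by blast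
  qed
qed

lemma clean1_fv: "clean1 \<Gamma> \<Gamma>' \<Longrightarrow> fv_ctx \<Gamma>' \<subseteq> fv_ctx \<Gamma>"
proof (induction rule: clean1.induct)
  case (push_out I V \<Gamma> \<Xi>) then show ?case by auto
next
  case (empty_brk V \<Xi>) then show ?case by auto
next
  case (dup I \<Xi>) then show ?case by auto
next
  case (inside \<Gamma> \<Gamma>' V \<Xi>) then show ?case by (auto simp: fv_ctx_def)
qed

lemma cleanA_bv: "cleanA Rs \<Gamma>0 \<Gamma>1 \<Longrightarrow> bv_ctx \<Gamma>1 \<subseteq># bv_ctx \<Gamma>0"
proof (induction rule: cleanA.induct)
  case (cpush Rs V I \<Gamma> \<Xi>) then show ?case by (simp add: ac_simps)
next
  case (cempty Rs V \<Xi>) then show ?case by simp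
next
  case (cdup Rs I I1 I2 \<Xi>) then show ?case by simp
next
  case (cins f V Rs \<Gamma> \<Gamma>' W \<Xi>)
  have "bv_item (Brk W \<Gamma>') \<subseteq># bv_item (Brk W \<Gamma>)" unfolding bv_Brk using cins.IH by simp
  then show ?case by simp
qed

lemma flat_Brk: "flat_item (Brk W \<Gamma>) = flat_ctx \<Gamma>"
  by (simp add: flat_ctx_def)

lemma in_flat_ctx: "A \<in># flat_ctx \<Gamma> \<longleftrightarrow> (\<exists>a\<in>#\<Gamma>. A \<in># flat_item a)"
  unfolding flat_ctx_def by (rule in_sum_image)

lemma fv_ctx_mem: "a \<in># \<Gamma> \<Longrightarrow> fv_item a \<subseteq> fv_ctx \<Gamma>"
  by (auto simp: fv_ctx_def)

lemma rel_id_sub: "\<Delta>1 \<subseteq># \<Delta>0 \<Longrightarrow> rel id \<Delta>1 \<Delta>0"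
  unfolding rel_def
proof
  fix F assume "\<Delta>1 \<subseteq># \<Delta>0" "F \<in># \<Delta>1"
  then have "F \<in># \<Delta>0" by (rule mset_subset_eqD)
  moreover have "fa (gr id) [] F F" by (rule fa_refl_gr) simp
  ultimately show "\<exists>F'\<in>#\<Delta>0. fa (gr id) [] F F'" by blast
qed

lemma refl_other:
  assumes "J \<in># \<Gamma>0" "A \<in># flat_item J" "\<forall>x. x \<notin> S \<longrightarrow> \<sigma> x = x"
    "S \<inter> fv_item J = {}" "S \<inter> brk J = {}"
  shows "fa (gr \<sigma>) [] A A"
proof (rule fa_refl_gr)
  fix x assume "x \<in> fv_fm A"
  then have "x \<in> fv_item J \<union> brk J" using flat_fv[OF assms(2)] by blast
  then have "x \<notin> S" using assms(4,5) by blast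
  then show "\<sigma> x = x" using assms(3) by blast
qed

lemma map2_conv: "map2 (O) (map converse Rs) Rs = map (\<lambda>R. R\<inverse> O R) Rs"
  by (induction Rs) auto

lemma list_all2_conv_rs: "list_all2 (\<lambda>R S. Range R = Domain S) (map converse Rs) Rs"
  by (induction Rs) auto

lemma cleanA_flat:
  "cleanA Rs \<Gamma>0 \<Gamma>1 \<Longrightarrow> (\<forall>x. count (bv_ctx \<Gamma>0) x \<le> 1) \<longrightarrow> set_mset (bv_ctx \<Gamma>0) \<inter> fv_ctx \<Gamma>0 = {} \<longrightarrow>
    (\<forall>R\<in>set Rs. Range R \<inter> set_mset (bv_ctx \<Gamma>0) = {} \<and> single_valued R) \<longrightarrow>
    flat_ctx \<Gamma>1 \<subseteq># flat_ctx \<Gamma>0 \<and> (\<exists>\<sigma>. (\<forall>x. x \<notin> set_mset (bv_ctx \<Gamma>0) \<longrightarrow> \<sigma> x = x) \<and> rel \<sigma> (flat_ctx \<Gamma>0) (flat_ctx \<Gamma>1))"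
proof (induction rule: cleanA.induct)
  case (cpush Rs V I \<Gamma> \<Xi>)
  have e: "flat_ctx (add_mset I (add_mset (Brk V \<Gamma>) \<Xi>)) = flat_ctx (add_mset (Brk V (add_mset I \<Gamma>)) \<Xi>)"
    by (simp add: ac_simps)
  let ?X = "flat_ctx (add_mset (Brk V (add_mset I \<Gamma>)) \<Xi>)"
  have r: "rel id ?X ?X" by (rule rel_id_sub) simp
  show ?case unfolding e
    by (intro impI conjI, simp, rule exI[of _ id], rule conjI[OF _ r]) simp
next
  case (cempty Rs V \<Xi>)
  have e: "flat_ctx (add_mset (Brk V {#}) \<Xi>) = flat_ctx \<Xi>" by simp
  have r: "rel id (flat_ctx \<Xi>) (flat_ctx \<Xi>)" by (rule rel_id_sub) simp
  show ?case unfolding e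
    by (intro impI conjI, simp, rule exI[of _ id], rule conjI[OF _ r]) simp
next
  case (cdup Rs I I1 I2 \<Xi>)
  let ?G = "add_mset I1 (add_mset I2 \<Xi>)"
  show ?case
  proof (intro impI conjI)
    assume c: "\<forall>x. count (bv_ctx ?G) x \<le> 1" and d: "set_mset (bv_ctx ?G) \<inter> fv_ctx ?G = {}"
      and R: "\<forall>R\<in>set Rs. Range R \<inter> set_mset (bv_ctx ?G) = {} \<and> single_valued R"
    show "flat_ctx (add_mset I1 \<Xi>) \<subseteq># flat_ctx ?G" by simp
    have "ia (map converse Rs) I2 I" using cdup(2) by (rule ia_conv)
    then have "ia (map2 (O) (map converse Rs) Rs) I2 I1"
      using cdup(1) list_all2_conv_rs by (rule ia_comp)
    then have ia21: "ia (map (\<lambda>R. R\<inverse> O R) Rs) I2 I1" by (simp add: map2_conv)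
    have bvI2: "bv_item I2 \<subseteq># bv_ctx ?G" by (rule bv_sub_member) simp
    have "\<forall>x. count (bv_item I2) x \<le> 1" using count_sub[OF bvI2 c] .
    then obtain \<sigma> where s: "ias \<sigma> (map (\<lambda>R. R\<inverse> O R) Rs) I2 I1" "\<forall>x. x \<notin> brk I2 \<longrightarrow> \<sigma> x = x"
      using glue_aux[OF ia21] by blast
    have brkI2: "brk I2 \<subseteq> set_mset (bv_ctx ?G)" using brk_bv[of I2] bvI2 by (auto dest: mset_subset_eqD)
    have fvG: "fv_item J \<inter> set_mset (bv_ctx ?G) = {}" if "J \<in># ?G" for J
      using fv_ctx_mem[OF that] d by blast
    have dis: "brk J \<inter> brk I2 = {}" if "J \<in># add_mset I1 \<Xi>" for J
    proof -
      have "bv_item I2 + bv_item J \<subseteq># bv_ctx (add_mset I2 (add_mset I1 \<Xi>))" using bv_two that by blast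
      moreover have "add_mset I2 (add_mset I1 \<Xi>) = ?G" by simp
      ultimately have "bv_item I2 + bv_item J \<subseteq># bv_ctx ?G" by simp
      then have "\<forall>x. count (bv_item I2 + bv_item J) x \<le> 1" using count_sub c by blast
      then have "set_mset (bv_item I2) \<inter> set_mset (bv_item J) = {}" by (rule count_le1_disj)
      then show ?thesis using brk_bv[of I2] brk_bv[of J] by blast
    qed
    have RR: "\<forall>R'\<in>set (map (\<lambda>R. R\<inverse> O R) Rs). R' \<subseteq> gr \<sigma>"
    proof (intro ballI subsetI)
      fix R' p assume "R' \<in> set (map (\<lambda>R. R\<inverse> O R) Rs)" "p \<in> R'"
      then obtain R a b b' where Rin: "R \<in> set Rs" "p = (b, b')" "(a, b) \<in> R" "(a, b') \<in> R" by auto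
      then have "b = b'" using R unfolding single_valued_def by blast
      moreover have "b \<notin> brk I2" using Rin R brkI2 by blast
      ultimately show "p \<in> gr \<sigma>" using s(2) Rin(2) by simp
    qed
    have FV: "\<forall>x\<in>fv_item I2. x \<notin> doms (map (\<lambda>R. R\<inverse> O R) Rs) \<longrightarrow> \<sigma> x = x"
      using fvG[of I2] brkI2 s(2) by auto
    show "\<exists>\<sigma>. (\<forall>x. x \<notin> set_mset (bv_ctx ?G) \<longrightarrow> \<sigma> x = x) \<and> rel \<sigma> (flat_ctx ?G) (flat_ctx (add_mset I1 \<Xi>))"
    proof (intro exI conjI)
      show "\<forall>x. x \<notin> set_mset (bv_ctx ?G) \<longrightarrow> \<sigma> x = x" using s(2) brkI2 by blast
      show "rel \<sigma> (flat_ctx ?G) (flat_ctx (add_mset I1 \<Xi>))" unfolding rel_def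
      proof
        fix F assume "F \<in># flat_ctx ?G"
        then obtain J where J: "J \<in># ?G" "F \<in># flat_item J" unfolding in_flat_ctx by blast
        show "\<exists>F'\<in>#flat_ctx (add_mset I1 \<Xi>). fa (gr \<sigma>) [] F F'"
        proof (cases "J \<in># add_mset I1 \<Xi>")
          case True
          have "fa (gr \<sigma>) [] F F"
          proof (rule refl_other[OF J(1) J(2)])
            show "\<forall>x. x \<notin> brk I2 \<longrightarrow> \<sigma> x = x" by (rule s(2))
            show "brk I2 \<inter> fv_item J = {}" using fvG[OF J(1)] brkI2 by blast
            show "brk I2 \<inter> brk J = {}" using dis[OF True] by blast
          qed
          moreover have "F \<in># flat_ctx (add_mset I1 \<Xi>)" unfolding in_flat_ctx using True J(2) by blast
          ultimately show ?thesis by blast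
        next
          case False
          then have "J = I2" using J(1) by auto
          then obtain B where "B \<in># flat_item I1" "fa (gr \<sigma>) [] F B"
            using C_item[OF s(1) RR FV] J(2) by blast
          moreover then have "B \<in># flat_ctx (add_mset I1 \<Xi>)" by simp
          ultimately show ?thesis by blast
        qed
      qed
    qed
  qed
next
  case (cins f V Rs \<Gamma> \<Gamma>' W \<Xi>)
  let ?L = "(\<lambda>x. (x, f x)) ` fset V # Rs"
  let ?G = "add_mset (Brk W \<Gamma>) \<Xi>"
  show ?case
  proof (intro impI)
    assume c: "\<forall>x. count (bv_ctx ?G) x \<le> 1" and d: "set_mset (bv_ctx ?G) \<inter> fv_ctx ?G = {}"
      and R: "\<forall>R\<in>set Rs. Range R \<inter> set_mset (bv_ctx ?G) = {} \<and> single_valued R"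
    have bW: "bv_item (Brk W \<Gamma>) = mset_set (fset W) + bv_ctx \<Gamma>" by (rule bv_Brk)
    have sub1: "bv_item (Brk W \<Gamma>) \<subseteq># bv_ctx ?G" by (rule bv_sub_member) simp
    have sub2: "bv_ctx \<Gamma> \<subseteq># bv_ctx ?G" using sub1 unfolding bW
      by (metis mset_subset_eq_add_right subset_mset.dual_order.trans)
    have cW: "\<forall>x. count (mset_set (fset W) + bv_ctx \<Gamma>) x \<le> 1" using count_sub[OF sub1 c] unfolding bW .
    have dW: "fset W \<inter> set_mset (bv_ctx \<Gamma>) = {}" using count_le1_disj[OF cW] by simp
    have c1: "\<forall>x. count (bv_ctx \<Gamma>) x \<le> 1" using count_sub[OF sub2 c] .
    have d1: "set_mset (bv_ctx \<Gamma>) \<inter> fv_ctx \<Gamma> = {}"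
    proof -
      have "fv_ctx \<Gamma> \<subseteq> fv_item (Brk W \<Gamma>) \<union> fset W" by (auto simp: fv_ctx_def)
      moreover have "fv_item (Brk W \<Gamma>) \<subseteq> fv_ctx ?G" by simp
      moreover have "set_mset (bv_ctx \<Gamma>) \<subseteq> set_mset (bv_ctx ?G)" using sub2 by (rule set_mset_mono)
      ultimately show ?thesis using d dW by blast
    qed
    have R1: "\<forall>R\<in>set ?L. Range R \<inter> set_mset (bv_ctx \<Gamma>) = {} \<and> single_valued R"
    proof
      fix R assume "R \<in> set ?L"
      then have "R = (\<lambda>x. (x, f x)) ` fset V \<or> R \<in> set Rs" by simp
      then show "Range R \<inter> set_mset (bv_ctx \<Gamma>) = {} \<and> single_valued R"
      proof
        assume Rl: "R = (\<lambda>x. (x, f x)) ` fset V"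
        have "Range R = f ` fset V" unfolding Rl by auto
        also have "\<dots> = fset W" using cins(2) unfolding bij_betw_def by blast
        finally have "Range R = fset W" .
        moreover have "single_valued R" unfolding Rl single_valued_def by auto
        ultimately show ?thesis using dW by blast
      next
        assume "R \<in> set Rs"
        then show ?thesis using R set_mset_mono[OF sub2] by blast
      qed
    qed
    obtain \<sigma> where IH: "flat_ctx \<Gamma>' \<subseteq># flat_ctx \<Gamma>" "\<forall>x. x \<notin> set_mset (bv_ctx \<Gamma>) \<longrightarrow> \<sigma> x = x"
      "rel \<sigma> (flat_ctx \<Gamma>) (flat_ctx \<Gamma>')"
      using cins.IH c1 d1 R1 by blast
    have "flat_ctx (add_mset (Brk W \<Gamma>') \<Xi>) \<subseteq># flat_ctx ?G"
      using IH(1) by (simp add: flat_ctx_def subset_mset.add_right_mono)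
    moreover have "\<forall>x. x \<notin> set_mset (bv_ctx ?G) \<longrightarrow> \<sigma> x = x" using IH(2) set_mset_mono[OF sub2] by blast
    moreover have "rel \<sigma> (flat_ctx ?G) (flat_ctx (add_mset (Brk W \<Gamma>') \<Xi>))" unfolding rel_def
    proof
      fix F assume "F \<in># flat_ctx ?G"
      then have "F \<in># flat_ctx \<Gamma> \<or> F \<in># flat_ctx \<Xi>" by (simp add: flat_ctx_def)
      then show "\<exists>F'\<in>#flat_ctx (add_mset (Brk W \<Gamma>') \<Xi>). fa (gr \<sigma>) [] F F'"
      proof
        assume "F \<in># flat_ctx \<Gamma>"
        then obtain F' where "F' \<in># flat_ctx \<Gamma>'" "fa (gr \<sigma>) [] F F'" using IH(3) unfolding rel_def by blast
        moreover then have "F' \<in># flat_ctx (add_mset (Brk W \<Gamma>') \<Xi>)" by (simp add: flat_ctx_def)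
        ultimately show ?thesis by blast
      next
        assume "F \<in># flat_ctx \<Xi>"
        then obtain J where J: "J \<in># \<Xi>" "F \<in># flat_item J" unfolding in_flat_ctx by blast
        have JG: "J \<in># ?G" using J(1) by simp
        have "bv_item (Brk W \<Gamma>) + bv_item J \<subseteq># bv_ctx ?G" using bv_two[OF J(1)] .
        then have "\<forall>x. count (bv_item (Brk W \<Gamma>) + bv_item J) x \<le> 1" using count_sub c by blast
        then have "set_mset (bv_item (Brk W \<Gamma>)) \<inter> set_mset (bv_item J) = {}" by (rule count_le1_disj)
        moreover have "set_mset (bv_ctx \<Gamma>) \<subseteq> set_mset (bv_item (Brk W \<Gamma>))" unfolding bW by simp
        ultimately have dj: "set_mset (bv_ctx \<Gamma>) \<inter> brk J = {}" using brk_bv[of J] by blast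
        have dfv: "set_mset (bv_ctx \<Gamma>) \<inter> fv_item J = {}"
          using fv_ctx_mem[OF JG] d set_mset_mono[OF sub2] by blast
        have "fa (gr \<sigma>) [] F F" by (rule refl_other[OF JG J(2) IH(2) dfv dj])
        moreover have "F \<in># flat_ctx (add_mset (Brk W \<Gamma>') \<Xi>)" using J unfolding in_flat_ctx by auto
        ultimately show ?thesis by blast
      qed
    qed
    ultimately show "flat_ctx (add_mset (Brk W \<Gamma>') \<Xi>) \<subseteq># flat_ctx ?G \<and>
      (\<exists>\<sigma>. (\<forall>x. x \<notin> set_mset (bv_ctx ?G) \<longrightarrow> \<sigma> x = x) \<and> rel \<sigma> (flat_ctx ?G) (flat_ctx (add_mset (Brk W \<Gamma>') \<Xi>)))"
      by blast
  qed
qed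

lemma stepA:
  assumes "rel_mset (ia []) \<Gamma>a \<Gamma>b" "\<forall>x. count (bv_ctx \<Gamma>a) x \<le> 1" "set_mset (bv_ctx \<Gamma>a) \<inter> fv_ctx \<Gamma>a = {}"
  shows "\<exists>\<sigma>. (\<forall>x. x \<notin> set_mset (bv_ctx \<Gamma>a) \<longrightarrow> \<sigma> x = x) \<and> rel \<sigma> (flat_ctx \<Gamma>a) (flat_ctx \<Gamma>b)"
proof -
  obtain \<sigma> where s: "rel_mset (ias \<sigma> []) \<Gamma>a \<Gamma>b" "\<forall>x. x \<notin> set_mset (bv_ctx \<Gamma>a) \<longrightarrow> \<sigma> x = x"
    using glue_ctx[OF assms(1,2)] by blast
  have "rel \<sigma> (flat_ctx \<Gamma>a) (flat_ctx \<Gamma>b)" unfolding rel_def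
  proof
    fix F assume "F \<in># flat_ctx \<Gamma>a"
    then obtain a where a: "a \<in># \<Gamma>a" "F \<in># flat_item a" unfolding in_flat_ctx by blast
    obtain b where b: "b \<in># \<Gamma>b" "ias \<sigma> [] a b" using rel_mset_ex[OF s(1) a(1)] by blast
    have "\<forall>x\<in>fv_item a. x \<notin> doms [] \<longrightarrow> \<sigma> x = x" using fv_ctx_mem[OF a(1)] assms(3) s(2) by blast
    then obtain B where "B \<in># flat_item b" "fa (gr \<sigma>) [] F B" using C_item[OF b(2) _ _ a(2)] by auto
    moreover then have "B \<in># flat_ctx \<Gamma>b" unfolding in_flat_ctx using b(1) by blast
    ultimately show "\<exists>F'\<in>#flat_ctx \<Gamma>b. fa (gr \<sigma>) [] F F'" by blast
  qed
  then show ?thesis using s(2) by blast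
qed

lemma fv_rel: "rel_mset (ia []) \<Gamma> \<Delta> \<Longrightarrow> fv_ctx \<Gamma> \<subseteq> fv_ctx \<Delta>"
proof
  fix x assume r: "rel_mset (ia []) \<Gamma> \<Delta>" and "x \<in> fv_ctx \<Gamma>"
  then obtain a where a: "a \<in># \<Gamma>" "x \<in> fv_item a" by (auto simp: fv_ctx_def)
  obtain b where b: "b \<in># \<Delta>" "ia [] a b" using rel_mset_ex[OF r a(1)] by blast
  have "x \<in> fv_item b" using ia_fv[OF b(2) a(2)] by simp
  then show "x \<in> fv_ctx \<Delta>" using b(1) by (auto simp: fv_ctx_def)
qed

lemma rel_ia_conv: "rel_mset (ia []) \<Gamma> \<Delta> \<Longrightarrow> rel_mset (ia []) \<Delta> \<Gamma>"
proof -
  assume "rel_mset (ia []) \<Gamma> \<Delta>"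
  then have "rel_mset (\<lambda>a b. ia [] b a) \<Delta> \<Gamma>" by (rule rel_mset_conv)
  then show ?thesis by (rule rel_mset_mono') (metis ia_conv list.simps(8))
qed

lemma rel_ia_comp: "rel_mset (ia []) \<Gamma> \<Delta> \<Longrightarrow> rel_mset (ia []) \<Delta> \<Theta> \<Longrightarrow> rel_mset (ia []) \<Gamma> \<Theta>"
proof -
  assume "rel_mset (ia []) \<Gamma> \<Delta>" "rel_mset (ia []) \<Delta> \<Theta>"
  then have "rel_mset (ia [] OO ia []) \<Gamma> \<Theta>" by (rule rel_mset_comp)
  then show ?thesis
  proof (rule rel_mset_mono')
    fix a c assume "(ia [] OO ia []) a c"
    then obtain b where "ia [] a b" "ia [] b c" by blast
    then show "ia [] a c" using ia_comp[of "[]" a b "[]" c] by simp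
  qed
qed

lemma alpha_fv: "alpha_fm [] A B \<Longrightarrow> fv_fm A = fv_fm B"
proof -
  assume "alpha_fm [] A B"
  then have f: "fa Id [] A B" by (simp add: alpha_fm_fa)
  then have g: "fa Id [] B A" using fa_conv[OF f] by simp
  show ?thesis
  proof
    show "fv_fm A \<subseteq> fv_fm B" using fa_fv[OF f] by fastforce
    show "fv_fm B \<subseteq> fv_fm A" using fa_fv[OF g] by fastforce
  qed
qed



lemma fresh_facts:
  assumes "flattening \<Delta> E \<Gamma> A"
  obtains \<Gamma>0 where "rel_mset (ia []) \<Gamma> \<Gamma>0" "alpha_fm [] A E" "\<forall>x. count (bv_ctx \<Gamma>0) x \<le> 1"
    "set_mset (bv_ctx \<Gamma>0) \<inter> fv_ctx \<Gamma>0 = {}" "set_mset (bv_ctx \<Gamma>0) \<inter> fv_fm E = {}" "\<Delta> = flat_ctx \<Gamma>0"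
proof -
  obtain \<Gamma>0 where f: "fresh_variant \<Gamma> A \<Gamma>0 E" "\<Delta> = flat_ctx \<Gamma>0"
    using assms unfolding flattening_def by blast
  then have a: "alpha_ctx \<Gamma> \<Gamma>0" "alpha_fm [] A E" "\<forall>x. count (bv_ctx \<Gamma>0 + bv_fm E) x \<le> 1"
    "set_mset (bv_ctx \<Gamma>0 + bv_fm E) \<inter> (fv_ctx \<Gamma>0 \<union> fv_fm E) = {}"
    unfolding fresh_variant_def by blast+
  have "\<forall>x. count (bv_ctx \<Gamma>0) x \<le> 1" using count_sub[OF _ a(3)] by simp
  moreover have "set_mset (bv_ctx \<Gamma>0) \<inter> fv_ctx \<Gamma>0 = {}" "set_mset (bv_ctx \<Gamma>0) \<inter> fv_fm E = {}"
    using a(4) by auto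
  ultimately show ?thesis using that alpha_ctx_rel[OF a(1)] a(2) f(2) by blast
qed

theorem proposition4:
  fixes \<Gamma> \<Gamma>' :: ljb_ctx and A E E' :: fm and \<Delta> \<Delta>' :: "fm multiset"
  assumes "clean1 \<Gamma> \<Gamma>'"
    and "flattening \<Delta> E \<Gamma> A"
    and "flattening \<Delta>' E' \<Gamma>' A"
  shows "\<forall>h. lj \<Delta> E h \<longleftrightarrow> lj \<Delta>' E' h"
proof -
  obtain \<Gamma>0 where g0: "rel_mset (ia []) \<Gamma> \<Gamma>0" "alpha_fm [] A E" "\<forall>x. count (bv_ctx \<Gamma>0) x \<le> 1"
    "set_mset (bv_ctx \<Gamma>0) \<inter> fv_ctx \<Gamma>0 = {}" "set_mset (bv_ctx \<Gamma>0) \<inter> fv_fm E = {}" "\<Delta> = flat_ctx \<Gamma>0"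
    using fresh_facts[OF assms(2)] by blast
  obtain \<Gamma>0' where g0': "rel_mset (ia []) \<Gamma>' \<Gamma>0'" "alpha_fm [] A E'" "\<forall>x. count (bv_ctx \<Gamma>0') x \<le> 1"
    "set_mset (bv_ctx \<Gamma>0') \<inter> fv_ctx \<Gamma>0' = {}" "set_mset (bv_ctx \<Gamma>0') \<inter> fv_fm E' = {}" "\<Delta>' = flat_ctx \<Gamma>0'"
    using fresh_facts[OF assms(3)] by blast
  obtain \<Gamma>1 where g1: "cleanA [] \<Gamma>0 \<Gamma>1" "rel_mset (ia []) \<Gamma>' \<Gamma>1"
    using transfer[OF assms(1)] g0(1) by blast
  have r10': "rel_mset (ia []) \<Gamma>1 \<Gamma>0'" using rel_ia_comp[OF rel_ia_conv[OF g1(2)] g0'(1)] .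
  have r0'1: "rel_mset (ia []) \<Gamma>0' \<Gamma>1" using rel_ia_conv[OF r10'] .
  have step4: "flat_ctx \<Gamma>1 \<subseteq># flat_ctx \<Gamma>0 \<and>
      (\<exists>\<sigma>. (\<forall>x. x \<notin> set_mset (bv_ctx \<Gamma>0) \<longrightarrow> \<sigma> x = x) \<and> rel \<sigma> (flat_ctx \<Gamma>0) (flat_ctx \<Gamma>1))"
    using cleanA_flat[OF g1(1)] g0(3,4) by simp
  then obtain \<sigma>1 where s1: "\<forall>x. x \<notin> set_mset (bv_ctx \<Gamma>0) \<longrightarrow> \<sigma>1 x = x" "rel \<sigma>1 (flat_ctx \<Gamma>0) (flat_ctx \<Gamma>1)"
    by blast
  have sub: "flat_ctx \<Gamma>1 \<subseteq># flat_ctx \<Gamma>0" using step4 by blast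
  have bv1: "bv_ctx \<Gamma>1 \<subseteq># bv_ctx \<Gamma>0" by (rule cleanA_bv[OF g1(1)])
  have bv1s: "set_mset (bv_ctx \<Gamma>1) \<subseteq> set_mset (bv_ctx \<Gamma>0)" by (rule set_mset_mono[OF bv1])
  have c1: "\<forall>x. count (bv_ctx \<Gamma>1) x \<le> 1" using count_sub[OF bv1 g0(3)] .
  have "fv_ctx \<Gamma>1 \<subseteq> fv_ctx \<Gamma>'" by (rule fv_rel[OF rel_ia_conv[OF g1(2)]])
  also have "\<dots> \<subseteq> fv_ctx \<Gamma>" by (rule clean1_fv[OF assms(1)])
  also have "\<dots> \<subseteq> fv_ctx \<Gamma>0" by (rule fv_rel[OF g0(1)])
  finally have fv1: "fv_ctx \<Gamma>1 \<subseteq> fv_ctx \<Gamma>0" .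
  have d1: "set_mset (bv_ctx \<Gamma>1) \<inter> fv_ctx \<Gamma>1 = {}" using g0(4) bv1s fv1 by blast
  obtain \<sigma>2 where s2: "\<forall>x. x \<notin> set_mset (bv_ctx \<Gamma>1) \<longrightarrow> \<sigma>2 x = x" "rel \<sigma>2 (flat_ctx \<Gamma>1) (flat_ctx \<Gamma>0')"
    using stepA[OF r10' c1 d1] by blast
  obtain \<sigma>3 where s3: "\<forall>x. x \<notin> set_mset (bv_ctx \<Gamma>0') \<longrightarrow> \<sigma>3 x = x" "rel \<sigma>3 (flat_ctx \<Gamma>0') (flat_ctx \<Gamma>1)"
    using stepA[OF r0'1 g0'(3,4)] by blast
  have fAE: "fa Id [] A E" "fa Id [] A E'" using g0(2) g0'(2) by (simp_all add: alpha_fm_fa)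
  have "fa (Id\<inverse>) (map converse []) E A" by (rule fa_conv[OF fAE(1)])
  then have fEA: "fa Id [] E A" by simp
  have fEE': "fa Id [] E E'" using fa_comp[OF fEA fAE(2)] by simp
  have "fa (Id\<inverse>) (map converse []) E' E" by (rule fa_conv[OF fEE'])
  then have fE'E: "fa Id [] E' E" by simp
  have e1: "fa (gr \<sigma>1) [] E E" by (rule fa_refl_gr) (use g0(5) s1(1) in blast)
  have e2: "fa (gr \<sigma>2) [] E E'"
  proof (rule fa_mono[OF fEE'])
    fix x y assume "x \<in> fv_fm E" "(x, y) \<in> Id"
    moreover then have "x \<notin> set_mset (bv_ctx \<Gamma>1)" using g0(5) bv1s by blast
    ultimately show "(x, y) \<in> gr \<sigma>2" using s2(1) by force
  qed
  have e3: "fa (gr \<sigma>3) [] E' E"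
  proof (rule fa_mono[OF fE'E])
    fix x y assume "x \<in> fv_fm E'" "(x, y) \<in> Id"
    moreover then have "x \<notin> set_mset (bv_ctx \<Gamma>0')" using g0'(5) by blast
    ultimately show "(x, y) \<in> gr \<sigma>3" using s3(1) by force
  qed
  have e4: "fa (gr id) [] E E" by (rule fa_refl_gr) simp
  have r4: "rel id (flat_ctx \<Gamma>1) (flat_ctx \<Gamma>0)" by (rule rel_id_sub[OF sub])
  show ?thesis
  proof (intro allI iffI)
    fix h assume "lj \<Delta> E h"
    then have "lj (flat_ctx \<Gamma>1) E h" using lj_rename[OF _ s1(2) e1] g0(6) by simp
    then show "lj \<Delta>' E' h" using lj_rename[OF _ s2(2) e2] g0'(6) by simp
  next
    fix h assume "lj \<Delta>' E' h"
    then have "lj (flat_ctx \<Gamma>1) E h" using lj_rename[OF _ s3(2) e3] g0'(6) by simp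
    then show "lj \<Delta> E h" using lj_rename[OF _ r4 e4] g0(6) by simp
  qed
qed

end
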